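(* For every ballot profile $\mathcal{A}=(A_1,\dots,A_n)$ over a candidate set $C$ with $|C|=m$ and every committee size $k\le m$, a committee $W\subseteq C$ with $|W|=k$ that provides EJR for $(\mathcal{A},k)$ can be computed using $O(nmk)$ arithmetic operations.
   Context: Setting: voters $N=\{1,\dots,n\}$, candidates $C=\{c_1,\dots,c_m\}$, approval ballots $A_i\subseteq C$, $k$ a positive integer with $k\le m$; the profile is given as an $n\times m$ 0/1 table; arithmetic operations on integers are counted at unit cost. EJR: for $\ell\in\{1,\dots,k\}$, $N^*\subseteq N$ is $\ell$-cohesive if $|N^*|\ge\ell n/k$ and $|\bigcap_{i\in N^*}A_i|\ge\ell$. A committee $W$, $|W|=k$, provides EJR for $(\mathcal{A},k)$ if for every $\ell$ and every $\ell$-cohesive $N^*$ some $i\in N^*$ has $|A_i\cap W|\ge\ell$. *)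

theory Defs
  imports Complex_Main
begin

text \<open>Voters are 0,...,n-1, candidates are 0,...,m-1 (candidate c_(j+1) is j).
  A profile is a function A :: nat => nat set with A i the ballot of voter i.\<close>

definition cohesive :: "nat \<Rightarrow> nat \<Rightarrow> (nat \<Rightarrow> nat set) \<Rightarrow> nat \<Rightarrow> nat \<Rightarrow> nat set \<Rightarrow> bool" where
  "cohesive n m A k l S \<longleftrightarrow>
     S \<subseteq> {..<n} \<and>
     real (card S) \<ge> real l * real n / real k \<and>
     card ({..<m} \<inter> (\<Inter>i\<in>S. A i)) \<ge> l"

definition provides_EJR :: "nat \<Rightarrow> nat \<Rightarrow> (nat \<Rightarrow> nat set) \<Rightarrow> nat \<Rightarrow> nat set \<Rightarrow> bool" where
  "provides_EJR n m A k W \<longleftrightarrow>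
     W \<subseteq> {..<m} \<and> card W = k \<and>
     (\<forall>l\<in>{1..k}. \<forall>S. cohesive n m A k l S \<longrightarrow> (\<exists>i\<in>S. card (A i \<inter> W) \<ge> l))"

text \<open>Registers/memory cells indexed by nat, holding unbounded integers.
  Every instruction (in particular every arithmetic operation) costs one step.\<close>

datatype instr =
    Const nat int
  | Add nat nat nat
  | Sub nat nat nat
  | Mul nat nat nat
  | Div nat nat nat
  | Load nat nat
  | Store nat nat
  | Jz nat nat
  | Jneg nat nat
  | Jmp nat
  | Halt

type_synonym config = "nat \<times> (nat \<Rightarrow> int)"

definition halted :: "instr list \<Rightarrow> config \<Rightarrow> bool" where
  "halted P c \<longleftrightarrow> fst c \<ge> length P \<or> P ! fst c = Halt"

fun exec_instr :: "instr \<Rightarrow> config \<Rightarrow> config" where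
  "exec_instr (Const r v) (pc, mem) = (Suc pc, mem(r := v))"
| "exec_instr (Add r a b) (pc, mem) = (Suc pc, mem(r := mem a + mem b))"
| "exec_instr (Sub r a b) (pc, mem) = (Suc pc, mem(r := mem a - mem b))"
| "exec_instr (Mul r a b) (pc, mem) = (Suc pc, mem(r := mem a * mem b))"
| "exec_instr (Div r a b) (pc, mem) = (Suc pc, mem(r := mem a div mem b))"
| "exec_instr (Load r a) (pc, mem) = (Suc pc, mem(r := mem (nat (mem a))))"
| "exec_instr (Store a r) (pc, mem) = (Suc pc, mem(nat (mem a) := mem r))"
| "exec_instr (Jz r l) (pc, mem) = ((if mem r = 0 then l else Suc pc), mem)"
| "exec_instr (Jneg r l) (pc, mem) = ((if mem r < 0 then l else Suc pc), mem)"
| "exec_instr (Jmp l) (pc, mem) = (l, mem)"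
| "exec_instr Halt (pc, mem) = (pc, mem)"

definition step :: "instr list \<Rightarrow> config \<Rightarrow> config" where
  "step P c = (if halted P c then c else exec_instr (P ! fst c) c)"

definition run :: "instr list \<Rightarrow> nat \<Rightarrow> config \<Rightarrow> config" where
  "run P t c = (step P ^^ t) c"

definition init_mem :: "nat \<Rightarrow> nat \<Rightarrow> (nat \<Rightarrow> nat set) \<Rightarrow> nat \<Rightarrow> nat \<Rightarrow> int" where
  "init_mem n m A k addr =
     (if addr = 0 then int n
      else if addr = 1 then int m
      else if addr = 2 then int k
      else if 3 \<le> addr \<and> addr < 3 + n * m then
        (if (addr - 3) mod m \<in> A ((addr - 3) div m) then 1 else 0)
      else 0)"

definition output_committee :: "nat \<Rightarrow> nat \<Rightarrow> (nat \<Rightarrow> int) \<Rightarrow> nat set" where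
  "output_committee n m mem = {j. j < m \<and> mem (3 + n * m + j) \<noteq> 0}"

end

theory Submission
  imports Defs
begin


definition dcnt :: "nat \<Rightarrow> (nat \<Rightarrow> nat set) \<Rightarrow> nat set \<Rightarrow> nat \<Rightarrow> nat \<Rightarrow> nat" where
  "dcnt n A W l j = card {i. i < n \<and> j \<in> A i \<and> card (A i \<inter> W) < l}"

fun pass :: "nat \<Rightarrow> nat \<Rightarrow> (nat \<Rightarrow> nat set) \<Rightarrow> nat \<Rightarrow> nat set \<Rightarrow> nat \<Rightarrow> nat set" where
  "pass n k A l W 0 = W"
| "pass n k A l W (Suc j) = (let V = pass n k A l W j in
     if j \<notin> V \<and> l * n \<le> k * dcnt n A V l j then insert j V else V)"

fun lev :: "nat \<Rightarrow> nat \<Rightarrow> nat \<Rightarrow> (nat \<Rightarrow> nat set) \<Rightarrow> nat \<Rightarrow> nat set \<Rightarrow> nat set" where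
  "lev n m k A 0 W = W"
| "lev n m k A (Suc l) W = lev n m k A l (pass n k A (Suc l) W m)"

fun fillf :: "nat \<Rightarrow> nat set \<Rightarrow> nat \<Rightarrow> nat set" where
  "fillf k W 0 = W"
| "fillf k W (Suc j) = (let V = fillf k W j in if card V < k \<and> j \<notin> V then insert j V else V)"

lemma pass_sub: "W \<subseteq> pass n k A l W j \<and> pass n k A l W j \<subseteq> W \<union> {..<j}"
  by (induction j) (auto simp: Let_def)

lemma lev_sub: "W \<subseteq> lev n m k A l W \<and> lev n m k A l W \<subseteq> W \<union> {..<m}"
proof (induction l arbitrary: W)
  case 0 then show ?case by simp
next
  case (Suc l)
  have "W \<subseteq> pass n k A (Suc l) W m \<and> pass n k A (Suc l) W m \<subseteq> W \<union> {..<m}" by (rule pass_sub)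
  with Suc[of "pass n k A (Suc l) W m"] show ?case by auto
qed

lemma fillf_sub: "W \<subseteq> fillf k W j \<and> fillf k W j \<subseteq> W \<union> {..<j}"
  by (induction j) (auto simp: Let_def)

definition FP :: "nat \<Rightarrow> nat \<Rightarrow> nat \<Rightarrow> (nat \<Rightarrow> nat set) \<Rightarrow> nat set \<Rightarrow> nat \<Rightarrow> nat \<Rightarrow> bool" where
  "FP n m k A W l jj \<longleftrightarrow> (\<forall>j<jj. j \<notin> W \<longrightarrow> k * dcnt n A W l j < l * n)"

lemma dcnt_mono:
  assumes "W \<subseteq> W'" "finite W'"
  shows "dcnt n A W' l j \<le> dcnt n A W l j"
proof -
  have "{i. i < n \<and> j \<in> A i \<and> card (A i \<inter> W') < l} \<subseteq> {i. i < n \<and> j \<in> A i \<and> card (A i \<inter> W) < l}"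
  proof
    fix i assume "i \<in> {i. i < n \<and> j \<in> A i \<and> card (A i \<inter> W') < l}"
    moreover have "card (A i \<inter> W) \<le> card (A i \<inter> W')"
      using assms by (intro card_mono) auto
    ultimately show "i \<in> {i. i < n \<and> j \<in> A i \<and> card (A i \<inter> W) < l}" by auto
  qed
  then show ?thesis unfolding dcnt_def by (intro card_mono) auto
qed

lemma FP_mono:
  assumes "FP n m k A W l jj" "W \<subseteq> W'" "finite W'"
  shows "FP n m k A W' l jj"
  using assms dcnt_mono[OF assms(2,3), of n A l] unfolding FP_def
  by (meson le_less_trans mult_le_mono2 subsetD)

lemma pass_FP:
  assumes "finite W"
  shows "FP n m k A (pass n k A l W j) l j"
proof (induction j)
  case 0 then show ?case by (simp add: FP_def)
next
  case (Suc j)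
  define V where "V = pass n k A l W j"
  have finV: "finite V" using pass_sub[of W n k A l j] assms unfolding V_def
    by (meson finite_Un finite_lessThan finite_subset)
  show ?case
  proof (cases "j \<notin> V \<and> l * n \<le> k * dcnt n A V l j")
    case True
    then have e: "pass n k A l W (Suc j) = insert j V" by (simp add: V_def Let_def)
    have "FP n m k A (insert j V) l j" using Suc FP_mono[of n m k A V l j "insert j V"] finV
      unfolding V_def by auto
    then show ?thesis unfolding e FP_def by (auto simp: less_Suc_eq)
  next
    case False
    then have e: "pass n k A l W (Suc j) = V" by (auto simp: V_def Let_def)
    show ?thesis using Suc False unfolding e FP_def V_def by (auto simp: less_Suc_eq not_le)
  qed
qed

lemma lev_FP:
  assumes "finite W" "1 \<le> l0" "l0 \<le> l"
  shows "FP n m k A (lev n m k A l W) l0 m"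
  using assms
proof (induction l arbitrary: W)
  case 0 then show ?case by simp
next
  case (Suc l)
  define V where "V = pass n k A (Suc l) W m"
  have finV: "finite V" using pass_sub[of W n k A "Suc l" m] Suc.prems unfolding V_def
    by (meson finite_Un finite_lessThan finite_subset)
  have e: "lev n m k A (Suc l) W = lev n m k A l V" by (simp add: V_def)
  show ?case
  proof (cases "l0 = Suc l")
    case True
    have "FP n m k A V l0 m" using pass_FP[OF Suc.prems(1)] True unfolding V_def by simp
    moreover have "V \<subseteq> lev n m k A l V" using lev_sub[of V n m k A l] by blast
    moreover have "finite (lev n m k A l V)"
      proof -
      have "lev n m k A l V \<subseteq> V \<union> {..<m}" using lev_sub[of V n m k A l] by blast
      moreover have "finite (V \<union> {..<m})" using finV by simp
      ultimately show ?thesis by (rule finite_subset)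
    qed
    ultimately show ?thesis unfolding e using FP_mono[of n m k A V l0 m "lev n m k A l V"] by blast
  next
    case False
    then show ?thesis unfolding e using Suc.IH[OF finV] Suc.prems by auto
  qed
qed

definition Inv :: "nat \<Rightarrow> nat \<Rightarrow> (nat \<Rightarrow> nat set) \<Rightarrow> nat \<Rightarrow> nat set \<Rightarrow> bool" where
  "Inv n k A l W \<longleftrightarrow> (\<exists>ld::nat \<Rightarrow> real.
     (\<forall>i<n. ld i \<le> real k * real (min (card (A i \<inter> W)) l) / (real n * real l)) \<and>
     real (card W) \<le> (\<Sum>i<n. ld i))"

lemma Inv_step:
  assumes inv: "Inv n k A l W" and fin: "finite W" and l1: "1 \<le> l" and n1: "1 \<le> n"
    and jW: "j \<notin> W" and thr: "l * n \<le> k * dcnt n A W l j"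
  shows "Inv n k A l (insert j W)"
proof -
  obtain ld where ld1: "\<forall>i<n. ld i \<le> real k * real (min (card (A i \<inter> W)) l) / (real n * real l)"
    and ld2: "real (card W) \<le> (\<Sum>i<n. ld i)" using inv unfolding Inv_def by blast
  define D where "D = {i. i < n \<and> j \<in> A i \<and> card (A i \<inter> W) < l}"
  define c :: real where "c = real k / (real n * real l)"
  define ld' where "ld' i = ld i + (if i \<in> D then c else 0)" for i
  have Dsub: "D \<subseteq> {..<n}" unfolding D_def by auto
  have pos: "real n * real l > 0" using l1 n1 by simp
  have e1: "(\<Sum>i<n. ld' i) = (\<Sum>i<n. ld i) + (\<Sum>i<n. if i \<in> D then c else 0)"
    unfolding ld'_def by (simp add: sum.distrib)
  have e2: "(\<Sum>i<n. if i \<in> D then c else 0) = real (card D) * c"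
    using Dsub by (simp add: sum.If_cases Int_absorb1)
  have ge: "real (card D) * c \<ge> 1"
  proof -
    have "l * n \<le> k * card D" using thr unfolding dcnt_def D_def by simp
    then have "real (l * n) \<le> real (k * card D)" by (simp only: of_nat_le_iff)
    then have "real l * real n \<le> real k * real (card D)" by simp
    moreover have "real (card D) * c = (real k * real (card D)) / (real n * real l)"
      unfolding c_def by simp
    ultimately show ?thesis using pos by (simp add: le_divide_eq mult.commute)
  qed
  have s: "(\<Sum>i<n. ld' i) \<ge> (\<Sum>i<n. ld i) + 1" using e1 e2 ge by simp
  have cardins: "card (insert j W) = card W + 1" using fin jW by simp
  have p2: "real (card (insert j W)) \<le> (\<Sum>i<n. ld' i)" using s ld2 cardins by simp
  have p1: "ld' i \<le> real k * real (min (card (A i \<inter> insert j W)) l) / (real n * real l)" if "i < n" for i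
  proof (cases "i \<in> D")
    case True
    then have jA: "j \<in> A i" and lt: "card (A i \<inter> W) < l" unfolding D_def by auto
    have "A i \<inter> insert j W = insert j (A i \<inter> W)" using jA by auto
    then have cc: "card (A i \<inter> insert j W) = card (A i \<inter> W) + 1" using fin jW by simp
    have "ld' i = ld i + c" using True unfolding ld'_def by simp
    also have "\<dots> \<le> real k * real (card (A i \<inter> W)) / (real n * real l) + c"
      using ld1[rule_format, OF that] lt by (simp add: min_absorb1)
    also have "\<dots> = real k * real (card (A i \<inter> W) + 1) / (real n * real l)"
      unfolding c_def by (simp add: add_divide_distrib distrib_left)
    also have "\<dots> = real k * real (min (card (A i \<inter> insert j W)) l) / (real n * real l)"
      using cc lt by simp
    finally show ?thesis .
  next
    case False
    have "card (A i \<inter> W) \<le> card (A i \<inter> insert j W)" using fin by (intro card_mono) auto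
    then have "real (min (card (A i \<inter> W)) l) \<le> real (min (card (A i \<inter> insert j W)) l)" by simp
    then have "real k * real (min (card (A i \<inter> W)) l) / (real n * real l)
        \<le> real k * real (min (card (A i \<inter> insert j W)) l) / (real n * real l)"
      using pos by (intro divide_right_mono mult_left_mono) auto
    then show ?thesis using ld1 that False unfolding ld'_def by fastforce
  qed
  show ?thesis unfolding Inv_def using p1 p2 by blast
qed

lemma pass_Inv:
  assumes "Inv n k A l W" "finite W" "1 \<le> l" "1 \<le> n"
  shows "Inv n k A l (pass n k A l W j) \<and> finite (pass n k A l W j)"
proof (induction j)
  case 0 then show ?case using assms by simp
next
  case (Suc j)
  define V where "V = pass n k A l W j"
  show ?case
  proof (cases "j \<notin> V \<and> l * n \<le> k * dcnt n A V l j")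
    case True
    then have e: "pass n k A l W (Suc j) = insert j V" by (simp add: V_def Let_def)
    show ?thesis unfolding e using Inv_step[of n k A l V j] Suc True assms unfolding V_def by auto
  next
    case False
    then have e: "pass n k A l W (Suc j) = V" by (auto simp: V_def Let_def)
    show ?thesis unfolding e using Suc V_def by simp
  qed
qed

lemma Inv_down:
  assumes "Inv n k A (Suc l) W" "1 \<le> l"
  shows "Inv n k A l W"
proof -
  obtain ld where ld1: "\<forall>i<n. ld i \<le> real k * real (min (card (A i \<inter> W)) (Suc l)) / (real n * real (Suc l))"
    and ld2: "real (card W) \<le> (\<Sum>i<n. ld i)" using assms unfolding Inv_def by blast
  have "ld i \<le> real k * real (min (card (A i \<inter> W)) l) / (real n * real l)" if "i < n" for i
  proof -
    have key: "real (min r (Suc l)) / real (Suc l) \<le> real (min r l) / real l" for r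
    proof (cases "r \<le> l")
      case True
      then show ?thesis using assms(2) by (simp add: frac_le)
    next
      case False
      then show ?thesis using assms(2) by simp
    qed
    have "real k * real (min (card (A i \<inter> W)) (Suc l)) / (real n * real (Suc l))
        = (real k / real n) * (real (min (card (A i \<inter> W)) (Suc l)) / real (Suc l))" by simp
    also have "\<dots> \<le> (real k / real n) * (real (min (card (A i \<inter> W)) l) / real l)"
      by (intro mult_left_mono key) auto
    also have "\<dots> = real k * real (min (card (A i \<inter> W)) l) / (real n * real l)" by simp
    finally show ?thesis using ld1 that by fastforce
  qed
  then show ?thesis unfolding Inv_def using ld2 by blast
qed

lemma lev_Inv:
  assumes "Inv n k A l W" "finite W" "1 \<le> l" "1 \<le> n"
  shows "Inv n k A 1 (lev n m k A l W) \<and> finite (lev n m k A l W)"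
  using assms
proof (induction l arbitrary: W)
  case 0 then show ?case by simp
next
  case (Suc l)
  define V where "V = pass n k A (Suc l) W m"
  have iv: "Inv n k A (Suc l) V \<and> finite V" using pass_Inv[OF Suc.prems(1,2)] Suc.prems unfolding V_def by auto
  have e: "lev n m k A (Suc l) W = lev n m k A l V" by (simp add: V_def)
  show ?case
  proof (cases "l = 0")
    case True then show ?thesis unfolding e using iv by simp
  next
    case False
    then show ?thesis unfolding e using Suc.IH[of V] iv Inv_down[of n k A l V] Suc.prems by auto
  qed
qed

lemma Inv_card:
  assumes "Inv n k A 1 W" "1 \<le> n"
  shows "card W \<le> k"
proof -
  obtain ld where ld1: "\<forall>i<n. ld i \<le> real k * real (min (card (A i \<inter> W)) 1) / (real n * real (1::nat))"
    and ld2: "real (card W) \<le> (\<Sum>i<n. ld i)" using assms unfolding Inv_def by blast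
  have "ld i \<le> real k / real n" if "i < n" for i
  proof -
    have "real (min (card (A i \<inter> W)) 1) \<le> 1" by simp
    then have "real k * real (min (card (A i \<inter> W)) 1) \<le> real k" by (simp add: mult_left_le)
    then have "real k * real (min (card (A i \<inter> W)) 1) / real n \<le> real k / real n"
      by (intro divide_right_mono) auto
    then show ?thesis using ld1 that by fastforce
  qed
  then have "(\<Sum>i<n. ld i) \<le> (\<Sum>i<n. real k / real n)" by (intro sum_mono) auto
  also have "\<dots> = real k" using assms(2) by simp
  finally show ?thesis using ld2 by simp
qed


lemma fillf_card:
  assumes "finite W" "card W \<le> k"
  shows "card (fillf k W j) = min k (card (W \<union> {..<j}))"
proof (induction j)
  case 0 then show ?case using assms by simp
next
  case (Suc j)
  define V where "V = fillf k W j"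
  have VS: "V \<subseteq> W \<union> {..<j}" using fillf_sub[of W k j] unfolding V_def by blast
  have fin: "finite (W \<union> {..<j})" using assms by simp
  have cV: "card V = min k (card (W \<union> {..<j}))" using Suc unfolding V_def .
  have cS: "card (W \<union> {..<Suc j}) = card (W \<union> {..<j}) + (if j \<in> W then 0 else 1)"
  proof -
    have "W \<union> {..<Suc j} = insert j (W \<union> {..<j})" by (auto simp: lessThan_Suc)
    then show ?thesis using fin by (auto simp: insert_absorb)
  qed
  show ?case
  proof (cases "card V < k")
    case True
    then have cc: "card V = card (W \<union> {..<j})" using cV by simp
    have VE: "V = W \<union> {..<j}" using card_subset_eq[OF fin VS cc] .
    show ?thesis
    proof (cases "j \<in> W")
      case True
      then have "fillf k W (Suc j) = V" using VE by (simp add: V_def Let_def)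
      then show ?thesis using cS True cV by simp
    next
      case False
      then have jV: "j \<notin> V" using VE by auto
      then have "fillf k W (Suc j) = insert j V" using \<open>card V < k\<close> by (simp add: V_def Let_def)
      moreover have "card (insert j V) = card V + 1" using jV VE fin by simp
      ultimately show ?thesis using cS False cc True by simp
    qed
  next
    case False
    then have "fillf k W (Suc j) = V" by (simp add: V_def Let_def)
    then show ?thesis using False cV cS by auto
  qed
qed

lemma fillf_stop:
  assumes "k \<le> card (fillf k W j)"
  shows "fillf k W (j + d) = fillf k W j"
  by (induction d) (use assms in \<open>auto simp: Let_def\<close>)

definition algW :: "nat \<Rightarrow> nat \<Rightarrow> nat \<Rightarrow> (nat \<Rightarrow> nat set) \<Rightarrow> nat set" where
  "algW n m k A = fillf k (lev n m k A k {}) m"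

lemma algW_EJR:
  assumes n1: "1 \<le> n" and k1: "1 \<le> k" and km: "k \<le> m"
  shows "provides_EJR n m A k (algW n m k A)"
proof -
  define Wm where "Wm = lev n m k A k {}"
  define Wf where "Wf = fillf k Wm m"
  have Wm_sub: "Wm \<subseteq> {..<m}" using lev_sub[of "{}" n m k A k] unfolding Wm_def by simp
  have finWm: "finite Wm" using Wm_sub finite_subset by blast
  have "Inv n k A k {}" unfolding Inv_def by (rule exI[of _ "\<lambda>_. 0"]) simp
  then have "Inv n k A 1 Wm" using lev_Inv[of n k A k "{}" m] n1 k1 unfolding Wm_def by simp
  then have cWm: "card Wm \<le> k" using Inv_card n1 by blast
  have Wf_sub: "Wf \<subseteq> {..<m}" using fillf_sub[of Wm k m] Wm_sub unfolding Wf_def by blast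
  have finWf: "finite Wf" using Wf_sub finite_subset by blast
  have WmWf: "Wm \<subseteq> Wf" using fillf_sub[of Wm k m] unfolding Wf_def by blast
  have cWf: "card Wf = k"
  proof -
    have "Wm \<union> {..<m} = {..<m}" using Wm_sub by blast
    then show ?thesis using fillf_card[OF finWm cWm, of m] km unfolding Wf_def by simp
  qed
  have FPf: "FP n m k A Wf l m" if "1 \<le> l" "l \<le> k" for l
    using lev_FP[of "{}" l k n m k A] that FP_mono[of n m k A Wm l m Wf] WmWf finWf
    unfolding Wm_def by simp
  have ejr: "\<exists>i\<in>S. l \<le> card (A i \<inter> Wf)" if l: "l \<in> {1..k}" and coh: "cohesive n m A k l S" for l S
  proof (rule ccontr)
    assume "\<not> (\<exists>i\<in>S. l \<le> card (A i \<inter> Wf))"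
    then have lt: "\<forall>i\<in>S. card (A i \<inter> Wf) < l" by auto
    have Sn: "S \<subseteq> {..<n}" and cS: "real l * real n / real k \<le> real (card S)"
      and cC: "l \<le> card ({..<m} \<inter> (\<Inter>i\<in>S. A i))" using coh unfolding cohesive_def by auto
    have kpos: "real k > 0" using k1 by simp
    have lnk: "real l * real n \<le> real k * real (card S)" using cS kpos by (simp add: divide_le_eq mult.commute)
    have "S \<noteq> {}"
    proof
      assume "S = {}"
      then have "real l * real n \<le> 0" using lnk by simp
      moreover have "real l * real n > 0" using l n1 by simp
      ultimately show False by simp
    qed
    then obtain i0 where i0: "i0 \<in> S" by blast
    have "\<not> ({..<m} \<inter> (\<Inter>i\<in>S. A i) \<subseteq> Wf)"
    proof
      assume sub: "{..<m} \<inter> (\<Inter>i\<in>S. A i) \<subseteq> Wf"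
      then have "{..<m} \<inter> (\<Inter>i\<in>S. A i) \<subseteq> A i0 \<inter> Wf" using i0 by blast
      then have "card ({..<m} \<inter> (\<Inter>i\<in>S. A i)) \<le> card (A i0 \<inter> Wf)"
        using finWf by (intro card_mono) auto
      then show False using cC lt i0 by fastforce
    qed
    then obtain j where j: "j < m" "j \<notin> Wf" "\<forall>i\<in>S. j \<in> A i" by blast
    have "k * dcnt n A Wf l j < l * n" using FPf[of l] l j unfolding FP_def by auto
    moreover have "card S \<le> dcnt n A Wf l j" unfolding dcnt_def
      using Sn j lt by (intro card_mono) auto
    ultimately have "k * card S < l * n" by (meson le_less_trans mult_le_mono2)
    then have "real k * real (card S) < real l * real n" by (metis of_nat_less_iff of_nat_mult)
    then show False using lnk by simp
  qed
  show ?thesis unfolding provides_EJR_def algW_def using Wf_sub cWf ejr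
    unfolding Wf_def Wm_def by blast
qed


definition prog :: "instr list" where
  "prog = [Add 1 1 0,
    Mul 2 2 1,
    Add 2 2 0,
    Mul 0 2 1,
    Add 0 0 0,
    Add 0 0 0,
    Add 0 0 0,
    Add 0 0 0,
    Add 0 0 0,
    Store 0 3,
    Const 3 1,
    Add 0 0 3,
    Store 0 4,
    Add 0 0 3,
    Store 0 5,
    Add 0 0 3,
    Store 0 6,
    Add 0 0 3,
    Store 0 7,
    Add 0 0 3,
    Store 0 8,
    Add 0 0 3,
    Store 0 9,
    Add 0 0 3,
    Store 0 10,
    Add 0 0 3,
    Store 0 11,
    Add 0 0 3,
    Store 0 12,
    Add 0 0 3,
    Store 0 13,
    Add 0 0 3,
    Store 0 14,
    Add 0 0 3,
    Store 0 15,
    Add 0 0 3,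
    Store 0 16,
    Add 0 0 3,
    Store 0 17,
    Add 0 0 3,
    Store 0 18,
    Add 0 0 3,
    Store 0 19,
    Add 0 0 3,
    Store 0 20,
    Add 0 0 3,
    Store 0 21,
    Div 4 2 1,
    Mul 5 4 1,
    Sub 5 2 5,
    Sub 6 1 5,
    Const 20 18,
    Sub 7 0 20,
    Mul 20 5 6,
    Add 8 7 20,
    Const 19 19,
    Add 8 8 19,
    Add 9 8 5,
    Sub 14 20 19,
    Jneg 14 69,
    Const 15 22,
    Add 16 7 19,
    Jz 14 69,
    Load 18 15,
    Store 16 18,
    Add 15 15 3,
    Add 16 16 3,
    Sub 14 14 3,
    Jmp 62,
    Const 21 0,
    Add 10 4 21,
    Jz 10 122,
    Const 20 0,
    Add 11 6 20,
    Add 12 9 20,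
    Add 13 7 20,
    Jz 11 120,
    Load 18 12,
    Jz 18 80,
    Jmp 116,
    Const 17 0,
    Add 14 5 17,
    Add 15 8 17,
    Add 16 13 17,
    Jz 14 96,
    Load 18 16,
    Jz 18 92,
    Load 19 15,
    Sub 19 19 10,
    Jneg 19 91,
    Jmp 92,
    Add 17 17 3,
    Sub 14 14 3,
    Add 15 15 3,
    Add 16 16 6,
    Jmp 84,
    Mul 19 17 4,
    Mul 20 10 5,
    Sub 19 19 20,
    Jneg 19 116,
    Store 12 3,
    Add 21 21 3,
    Const 19 0,
    Add 14 5 19,
    Add 15 8 19,
    Add 16 13 19,
    Jz 14 116,
    Load 18 16,
    Jz 18 112,
    Load 19 15,
    Add 19 19 3,
    Store 15 19,
    Sub 14 14 3,
    Add 15 15 3,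
    Add 16 16 6,
    Jmp 106,
    Sub 11 11 3,
    Add 12 12 3,
    Add 13 13 3,
    Jmp 76,
    Sub 10 10 3,
    Jmp 71,
    Const 20 0,
    Add 11 6 20,
    Add 12 9 20,
    Jz 11 137,
    Sub 19 21 4,
    Jneg 19 129,
    Jmp 137,
    Load 18 12,
    Jz 18 132,
    Jmp 134,
    Store 12 3,
    Add 21 21 3,
    Sub 11 11 3,
    Add 12 12 3,
    Jmp 125,
    Mul 0 5 6,
    Const 1 3,
    Add 0 0 1,
    Const 1 0,
    Add 1 9 1,
    Const 2 0,
    Add 2 6 2,
    Jz 2 152,
    Load 3 1,
    Store 0 3,
    Const 3 1,
    Add 0 0 3,
    Add 1 1 3,
    Sub 2 2 3,
    Jmp 144,
    Halt]"

lemma prog_len[simp]: "length prog = 153" by (simp add: prog_def)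

lemma prog_fetch[simp]:
  "prog ! 0 = Add 1 1 0"
  "prog ! 1 = Mul 2 2 1"
  "prog ! 2 = Add 2 2 0"
  "prog ! 3 = Mul 0 2 1"
  "prog ! 4 = Add 0 0 0"
  "prog ! 5 = Add 0 0 0"
  "prog ! 6 = Add 0 0 0"
  "prog ! 7 = Add 0 0 0"
  "prog ! 8 = Add 0 0 0"
  "prog ! 9 = Store 0 3"
  "prog ! 10 = Const 3 1"
  "prog ! 11 = Add 0 0 3"
  "prog ! 12 = Store 0 4"
  "prog ! 13 = Add 0 0 3"
  "prog ! 14 = Store 0 5"
  "prog ! 15 = Add 0 0 3"
  "prog ! 16 = Store 0 6"
  "prog ! 17 = Add 0 0 3"
  "prog ! 18 = Store 0 7"
  "prog ! 19 = Add 0 0 3"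
  "prog ! 20 = Store 0 8"
  "prog ! 21 = Add 0 0 3"
  "prog ! 22 = Store 0 9"
  "prog ! 23 = Add 0 0 3"
  "prog ! 24 = Store 0 10"
  "prog ! 25 = Add 0 0 3"
  "prog ! 26 = Store 0 11"
  "prog ! 27 = Add 0 0 3"
  "prog ! 28 = Store 0 12"
  "prog ! 29 = Add 0 0 3"
  "prog ! 30 = Store 0 13"
  "prog ! 31 = Add 0 0 3"
  "prog ! 32 = Store 0 14"
  "prog ! 33 = Add 0 0 3"
  "prog ! 34 = Store 0 15"
  "prog ! 35 = Add 0 0 3"
  "prog ! 36 = Store 0 16"
  "prog ! 37 = Add 0 0 3"
  "prog ! 38 = Store 0 17"
  "prog ! 39 = Add 0 0 3"
  "prog ! 40 = Store 0 18"
  "prog ! 41 = Add 0 0 3"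
  "prog ! 42 = Store 0 19"
  "prog ! 43 = Add 0 0 3"
  "prog ! 44 = Store 0 20"
  "prog ! 45 = Add 0 0 3"
  "prog ! 46 = Store 0 21"
  "prog ! 47 = Div 4 2 1"
  "prog ! 48 = Mul 5 4 1"
  "prog ! 49 = Sub 5 2 5"
  "prog ! 50 = Sub 6 1 5"
  "prog ! 51 = Const 20 18"
  "prog ! 52 = Sub 7 0 20"
  "prog ! 53 = Mul 20 5 6"
  "prog ! 54 = Add 8 7 20"
  "prog ! 55 = Const 19 19"
  "prog ! 56 = Add 8 8 19"
  "prog ! 57 = Add 9 8 5"
  "prog ! 58 = Sub 14 20 19"
  "prog ! 59 = Jneg 14 69"
  "prog ! 60 = Const 15 22"
  "prog ! 61 = Add 16 7 19"
  "prog ! 62 = Jz 14 69"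
  "prog ! 63 = Load 18 15"
  "prog ! 64 = Store 16 18"
  "prog ! 65 = Add 15 15 3"
  "prog ! 66 = Add 16 16 3"
  "prog ! 67 = Sub 14 14 3"
  "prog ! 68 = Jmp 62"
  "prog ! 69 = Const 21 0"
  "prog ! 70 = Add 10 4 21"
  "prog ! 71 = Jz 10 122"
  "prog ! 72 = Const 20 0"
  "prog ! 73 = Add 11 6 20"
  "prog ! 74 = Add 12 9 20"
  "prog ! 75 = Add 13 7 20"
  "prog ! 76 = Jz 11 120"
  "prog ! 77 = Load 18 12"
  "prog ! 78 = Jz 18 80"
  "prog ! 79 = Jmp 116"
  "prog ! 80 = Const 17 0"
  "prog ! 81 = Add 14 5 17"
  "prog ! 82 = Add 15 8 17"
  "prog ! 83 = Add 16 13 17"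
  "prog ! 84 = Jz 14 96"
  "prog ! 85 = Load 18 16"
  "prog ! 86 = Jz 18 92"
  "prog ! 87 = Load 19 15"
  "prog ! 88 = Sub 19 19 10"
  "prog ! 89 = Jneg 19 91"
  "prog ! 90 = Jmp 92"
  "prog ! 91 = Add 17 17 3"
  "prog ! 92 = Sub 14 14 3"
  "prog ! 93 = Add 15 15 3"
  "prog ! 94 = Add 16 16 6"
  "prog ! 95 = Jmp 84"
  "prog ! 96 = Mul 19 17 4"
  "prog ! 97 = Mul 20 10 5"
  "prog ! 98 = Sub 19 19 20"
  "prog ! 99 = Jneg 19 116"
  "prog ! 100 = Store 12 3"
  "prog ! 101 = Add 21 21 3"
  "prog ! 102 = Const 19 0"
  "prog ! 103 = Add 14 5 19"
  "prog ! 104 = Add 15 8 19"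
  "prog ! 105 = Add 16 13 19"
  "prog ! 106 = Jz 14 116"
  "prog ! 107 = Load 18 16"
  "prog ! 108 = Jz 18 112"
  "prog ! 109 = Load 19 15"
  "prog ! 110 = Add 19 19 3"
  "prog ! 111 = Store 15 19"
  "prog ! 112 = Sub 14 14 3"
  "prog ! 113 = Add 15 15 3"
  "prog ! 114 = Add 16 16 6"
  "prog ! 115 = Jmp 106"
  "prog ! 116 = Sub 11 11 3"
  "prog ! 117 = Add 12 12 3"
  "prog ! 118 = Add 13 13 3"
  "prog ! 119 = Jmp 76"
  "prog ! 120 = Sub 10 10 3"
  "prog ! 121 = Jmp 71"
  "prog ! 122 = Const 20 0"
  "prog ! 123 = Add 11 6 20"
  "prog ! 124 = Add 12 9 20"
  "prog ! 125 = Jz 11 137"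
  "prog ! 126 = Sub 19 21 4"
  "prog ! 127 = Jneg 19 129"
  "prog ! 128 = Jmp 137"
  "prog ! 129 = Load 18 12"
  "prog ! 130 = Jz 18 132"
  "prog ! 131 = Jmp 134"
  "prog ! 132 = Store 12 3"
  "prog ! 133 = Add 21 21 3"
  "prog ! 134 = Sub 11 11 3"
  "prog ! 135 = Add 12 12 3"
  "prog ! 136 = Jmp 125"
  "prog ! 137 = Mul 0 5 6"
  "prog ! 138 = Const 1 3"
  "prog ! 139 = Add 0 0 1"
  "prog ! 140 = Const 1 0"
  "prog ! 141 = Add 1 9 1"
  "prog ! 142 = Const 2 0"
  "prog ! 143 = Add 2 6 2"
  "prog ! 144 = Jz 2 152"
  "prog ! 145 = Load 3 1"
  "prog ! 146 = Store 0 3"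
  "prog ! 147 = Const 3 1"
  "prog ! 148 = Add 0 0 3"
  "prog ! 149 = Add 1 1 3"
  "prog ! 150 = Sub 2 2 3"
  "prog ! 151 = Jmp 144"
  "prog ! 152 = Halt"
  by (simp_all add: prog_def)

definition wpt :: "instr list \<Rightarrow> config \<Rightarrow> (nat \<Rightarrow> config \<Rightarrow> bool) \<Rightarrow> bool" where
  "wpt P c Q \<longleftrightarrow> (\<exists>t. Q t (run P t c))"

lemma run_Suc: "run P (Suc t) c = run P t (step P c)"
  unfolding run_def by (simp add: funpow_Suc_right del: funpow.simps)

lemma run_add: "run P (t1 + t2) c = run P t2 (run P t1 c)"
  unfolding run_def by (subst add.commute) (simp add: funpow_add)

lemma wpt_done: "Q 0 c \<Longrightarrow> wpt P c Q"
  unfolding wpt_def run_def by (rule exI[of _ 0]) simp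

lemma wpt_step:
  assumes "pc < length P" "P ! pc \<noteq> Halt" "wpt P (exec_instr (P ! pc) (pc, mem)) (\<lambda>t. Q (Suc t))"
  shows "wpt P (pc, mem) Q"
proof -
  obtain t where t: "Q (Suc t) (run P t (exec_instr (P ! pc) (pc, mem)))" using assms(3) unfolding wpt_def by blast
  have "step P (pc, mem) = exec_instr (P ! pc) (pc, mem)" using assms(1,2) unfolding step_def halted_def by simp
  then show ?thesis unfolding wpt_def using t by (metis run_Suc)
qed

lemma wpt_mono: "wpt P c Q1 \<Longrightarrow> (\<And>t c'. Q1 t c' \<Longrightarrow> Q t c') \<Longrightarrow> wpt P c Q"
  unfolding wpt_def by blast

lemma wpt_seq: "wpt P c Q1 \<Longrightarrow> (\<And>t c'. Q1 t c' \<Longrightarrow> wpt P c' (\<lambda>t'. Q (t + t'))) \<Longrightarrow> wpt P c Q"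
  unfolding wpt_def by (metis run_add)

lemma far_neq[simp]:
  "22 \<le> (x::nat) \<Longrightarrow> (a::nat) < 22 \<Longrightarrow> (x = a) = False"
  "22 \<le> (x::nat) \<Longrightarrow> (a::nat) < 22 \<Longrightarrow> (x + y = a) = False"
  "22 \<le> (x::nat) \<Longrightarrow> (a::nat) < 22 \<Longrightarrow> (x + y + z = a) = False"
  by auto

definition bitv :: "(nat \<Rightarrow> nat set) \<Rightarrow> nat \<Rightarrow> nat \<Rightarrow> int" where
  "bitv A m idx = (if idx mod m \<in> A (idx div m) then 1 else 0)"

definition arrs :: "nat \<Rightarrow> nat \<Rightarrow> (nat \<Rightarrow> nat set) \<Rightarrow> nat \<Rightarrow> nat \<Rightarrow> nat \<Rightarrow> (nat \<Rightarrow> nat) \<Rightarrow> nat set \<Rightarrow> (nat \<Rightarrow> int) \<Rightarrow> bool" where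
  "arrs n m A X H F rep W mem \<longleftrightarrow> (\<forall>idx<n*m. mem (X+idx) = bitv A m idx) \<and>
     (\<forall>i<n. mem (H+i) = int (rep i)) \<and> (\<forall>j<m. mem (F+j) = (if j \<in> W then 1 else 0))"

definition lay :: "nat \<Rightarrow> nat \<Rightarrow> nat \<Rightarrow> nat \<Rightarrow> nat \<Rightarrow> bool" where
  "lay n m X H F \<longleftrightarrow> 22 \<le> X \<and> X + n*m \<le> H \<and> F = H + n"

definition cregs :: "nat \<Rightarrow> nat \<Rightarrow> nat \<Rightarrow> nat \<Rightarrow> nat \<Rightarrow> nat \<Rightarrow> (nat \<Rightarrow> int) \<Rightarrow> bool" where
  "cregs n m k X H F mem \<longleftrightarrow> mem 3 = 1 \<and> mem 4 = int k \<and> mem 5 = int n \<and> mem 6 = int m \<and>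
     mem 7 = int X \<and> mem 8 = int H \<and> mem 9 = int F"

lemma arrs_reg[simp]: "lay n m X H F \<Longrightarrow> a < 22 \<Longrightarrow>
   arrs n m A X H F rep W (mem(a:=v)) = arrs n m A X H F rep W mem"
  unfolding arrs_def lay_def by auto

lemma cregs_reg[simp]: "9 < a \<Longrightarrow> cregs n m k X H F (mem(a:=v)) = cregs n m k X H F mem"
  unfolding cregs_def by auto

lemma cregs_H[simp]: "lay n m X H F \<Longrightarrow> cregs n m k X H F (mem(H + i := v)) = cregs n m k X H F mem"
  unfolding cregs_def lay_def by auto

lemma cregs_F[simp]: "lay n m X H F \<Longrightarrow> cregs n m k X H F (mem(F + i := v)) = cregs n m k X H F mem"
  unfolding cregs_def lay_def by auto

lemma cregs_D: "cregs n m k X H F mem \<Longrightarrow> mem 3 = 1 \<and> mem 4 = int k \<and> mem 5 = int n \<and> mem 6 = int m \<and>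
     mem 7 = int X \<and> mem 8 = int H \<and> mem 9 = int F"
  unfolding cregs_def by auto

lemma arrs_bit: "arrs n m A X H F rep W mem \<Longrightarrow> i < n \<Longrightarrow> j < m \<Longrightarrow>
   mem (X + j + i * m) = (if j \<in> A i then 1 else 0)"
proof -
  assume a: "arrs n m A X H F rep W mem" "i < n" "j < m"
  have "i * m + j < Suc i * m" using a(3) by simp
  also have "\<dots> \<le> n * m" using a(2) by (intro mult_le_mono1) simp
  finally have "i * m + j < n * m" .
  then have "mem (X + (i*m+j)) = bitv A m (i*m+j)" using a(1) unfolding arrs_def by blast
  moreover have "(i*m+j) mod m = j" "(i*m+j) div m = i" using a(3) by auto
  ultimately show ?thesis unfolding bitv_def by (simp add: add.commute add.left_commute add.assoc)
qed

lemma arrs_rep: "arrs n m A X H F rep W mem \<Longrightarrow> i < n \<Longrightarrow> mem (H + i) = int (rep i)"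
  unfolding arrs_def by blast

lemma arrs_flag: "arrs n m A X H F rep W mem \<Longrightarrow> j < m \<Longrightarrow> mem (F + j) = (if j \<in> W then 1 else 0)"
  unfolding arrs_def by blast

lemma arrs_updH: "lay n m X H F \<Longrightarrow> arrs n m A X H F rep W mem \<Longrightarrow> i < n \<Longrightarrow>
   arrs n m A X H F (rep(i := v)) W (mem(H + i := int v))"
  unfolding arrs_def lay_def by auto

lemma arrs_updF: "lay n m X H F \<Longrightarrow> arrs n m A X H F rep W mem \<Longrightarrow> j < m \<Longrightarrow>
   arrs n m A X H F rep (insert j W) (mem(F + j := 1))"
  unfolding arrs_def lay_def by auto

definition cntr :: "nat \<Rightarrow> (nat \<Rightarrow> nat set) \<Rightarrow> (nat \<Rightarrow> nat) \<Rightarrow> nat \<Rightarrow> nat \<Rightarrow> nat" where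
  "cntr i A rep l j = card {i'. i' < i \<and> j \<in> A i' \<and> rep i' < l}"

lemma cntr_Suc: "cntr (Suc i) A rep l j = cntr i A rep l j + (if j \<in> A i \<and> rep i < l then 1 else 0)"
proof -
  have "{i'. i' < Suc i \<and> j \<in> A i' \<and> rep i' < l} =
        (if j \<in> A i \<and> rep i < l then insert i {i'. i' < i \<and> j \<in> A i' \<and> rep i' < l} else {i'. i' < i \<and> j \<in> A i' \<and> rep i' < l})"
    by (auto simp: less_Suc_eq)
  then show ?thesis unfolding cntr_def by simp
qed

lemma cntr_0[simp]: "cntr 0 A rep l j = 0" unfolding cntr_def by simp

lemma wpt_call:
  "wpt P c (\<lambda>t c'. t \<le> B \<and> fst c' = pc' \<and> R (snd c')) \<Longrightarrow>
   (\<And>t mem'. t \<le> B \<Longrightarrow> R mem' \<Longrightarrow> wpt P (pc', mem') (\<lambda>t'. Q (t + t'))) \<Longrightarrow> wpt P c Q"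
  apply (erule wpt_seq)
  by (metis prod.collapse)

lemma arrs_cong: "(\<And>i. i < n \<Longrightarrow> r1 i = r2 i) \<Longrightarrow> arrs n m A X H F r1 W = arrs n m A X H F r2 W"
  unfolding arrs_def by (intro ext) auto

lemma arrs_updF'[simp]: "lay n m X H F \<Longrightarrow> j < m \<Longrightarrow> arrs n m A X H F rep W mem \<Longrightarrow>
   arrs n m A X H F rep (insert j W) (mem(F + j := 1))"
  by (rule arrs_updF)


definition postI where
  "postI n m k X H F A rep W l j mem mem' \<longleftrightarrow> cregs n m k X H F mem' \<and>
      arrs n m A X H F rep W mem' \<and> mem' 17 = int (cntr n A rep l j) \<and>
      mem' 10 = mem 10 \<and> mem' 11 = mem 11 \<and> mem' 12 = mem 12 \<and> mem' 13 = mem 13 \<and> mem' 21 = mem 21"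

lemma loopI:
  "\<forall>i mem. i + r = n \<longrightarrow> lay n m X H F \<longrightarrow> cregs n m k X H F mem \<longrightarrow> arrs n m A X H F rep W mem \<longrightarrow> j < m \<longrightarrow>
    mem 10 = int l \<longrightarrow> mem 13 = int (X + j) \<longrightarrow> mem 14 = int r \<longrightarrow> mem 15 = int (H + i) \<longrightarrow>
    mem 16 = int (X + j + i * m) \<longrightarrow> mem 17 = int (cntr i A rep l j) \<longrightarrow>
    wpt prog (84, mem) (\<lambda>t c. t \<le> 11 * r + 1 \<and> fst c = 96 \<and> postI n m k X H F A rep W l j mem (snd c))"
proof (induction r)
  case 0
  show ?case
    apply (intro allI impI)
    apply (rule wpt_step; simp)
    apply (rule wpt_done)
    apply (simp add: postI_def)
    done
next
  case (Suc r)
  show ?case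
  proof (intro allI impI)
    fix i mem
    assume a: "i + Suc r = n" "lay n m X H F" "cregs n m k X H F mem" "arrs n m A X H F rep W mem" "j < m"
      "mem 10 = int l" "mem 13 = int (X + j)" "mem 14 = int (Suc r)" "mem 15 = int (H + i)"
      "mem 16 = int (X + j + i * m)" "mem 17 = int (cntr i A rep l j)"
    have i: "i < n" using a(1) by simp
    note cr = cregs_D[OF a(3)]
    have ly: "22 \<le> X" "22 \<le> H" using a(2) unfolding lay_def by auto
    have b: "mem (X + j + i * m) = (if j \<in> A i then 1 else 0)" using arrs_bit[OF a(4) i a(5)] .
    have rp: "mem (H + i) = int (rep i)" using arrs_rep[OF a(4) i] .
    note IH = Suc.IH[rule_format, where i="Suc i"]
    have e16: "int (X + j + i * m) + int m = int (X + j + Suc i * m)" by simp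
    show "wpt prog (84, mem) (\<lambda>t c. t \<le> 11 * Suc r + 1 \<and> fst c = 96 \<and> postI n m k X H F A rep W l j mem (snd c))"
    proof (cases "j \<in> A i")
      case False
      show ?thesis
        apply (rule wpt_step; simp add: a cr b False del: of_nat_add of_nat_mult)
        apply (rule wpt_step; simp add: a cr b False del: of_nat_add of_nat_mult)
        apply (rule wpt_step; simp add: a cr b False del: of_nat_add of_nat_mult)
        apply (rule wpt_step; simp add: a cr b False del: of_nat_add of_nat_mult)
        apply (rule wpt_step; simp add: a cr b False del: of_nat_add of_nat_mult)
        apply (rule wpt_step; simp add: a cr b False del: of_nat_add of_nat_mult)
        apply (rule wpt_step; simp add: a cr b False del: of_nat_add of_nat_mult)
        apply (rule wpt_mono[OF IH])
        using a i by (auto simp: postI_def cr cntr_Suc False)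
    next
      case True
      show ?thesis
      proof (cases "rep i < l")
        case lt: True
        show ?thesis
        apply (rule wpt_step; simp add: a cr b rp ly True lt del: of_nat_add of_nat_mult)
        apply (rule wpt_step; simp add: a cr b rp ly True lt del: of_nat_add of_nat_mult)
        apply (rule wpt_step; simp add: a cr b rp ly True lt del: of_nat_add of_nat_mult)
        apply (rule wpt_step; simp add: a cr b rp ly True lt del: of_nat_add of_nat_mult)
        apply (rule wpt_step; simp add: a cr b rp ly True lt del: of_nat_add of_nat_mult)
        apply (rule wpt_step; simp add: a cr b rp ly True lt del: of_nat_add of_nat_mult)
        apply (rule wpt_step; simp add: a cr b rp ly True lt del: of_nat_add of_nat_mult)
        apply (rule wpt_step; simp add: a cr b rp ly True lt del: of_nat_add of_nat_mult)
        apply (rule wpt_step; simp add: a cr b rp ly True lt del: of_nat_add of_nat_mult)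
        apply (rule wpt_step; simp add: a cr b rp ly True lt del: of_nat_add of_nat_mult)
        apply (rule wpt_step; simp add: a cr b rp ly True lt del: of_nat_add of_nat_mult)
        apply (rule wpt_mono[OF IH])
        using a i by (auto simp: postI_def cr cntr_Suc True lt)
      next
        case lt: False
        show ?thesis
        apply (rule wpt_step; simp add: a cr b rp ly True lt del: of_nat_add of_nat_mult)
        apply (rule wpt_step; simp add: a cr b rp ly True lt del: of_nat_add of_nat_mult)
        apply (rule wpt_step; simp add: a cr b rp ly True lt del: of_nat_add of_nat_mult)
        apply (rule wpt_step; simp add: a cr b rp ly True lt del: of_nat_add of_nat_mult)
        apply (rule wpt_step; simp add: a cr b rp ly True lt del: of_nat_add of_nat_mult)
        apply (rule wpt_step; simp add: a cr b rp ly True lt del: of_nat_add of_nat_mult)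
        apply (rule wpt_step; simp add: a cr b rp ly True lt del: of_nat_add of_nat_mult)
        apply (rule wpt_step; simp add: a cr b rp ly True lt del: of_nat_add of_nat_mult)
        apply (rule wpt_step; simp add: a cr b rp ly True lt del: of_nat_add of_nat_mult)
        apply (rule wpt_step; simp add: a cr b rp ly True lt del: of_nat_add of_nat_mult)
        apply (rule wpt_step; simp add: a cr b rp ly True lt del: of_nat_add of_nat_mult)
        apply (rule wpt_mono[OF IH])
        using a i by (auto simp: postI_def cr cntr_Suc True lt)
      qed
    qed
  qed
qed

definition repj :: "(nat \<Rightarrow> nat set) \<Rightarrow> (nat \<Rightarrow> nat) \<Rightarrow> nat \<Rightarrow> nat \<Rightarrow> nat \<Rightarrow> nat" where
  "repj A rb j i i' = rb i' + (if i' < i \<and> j \<in> A i' then 1 else 0)"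

lemma repj_Suc_in: "j \<in> A i \<Longrightarrow> (repj A rb j i)(i := rb i + 1) = repj A rb j (Suc i)"
  unfolding repj_def by (auto simp: fun_eq_iff less_Suc_eq)

lemma repj_Suc_out: "j \<notin> A i \<Longrightarrow> repj A rb j (Suc i) = repj A rb j i"
  unfolding repj_def by (auto simp: fun_eq_iff less_Suc_eq)

lemma repj_self: "repj A rb j i i = rb i"
  unfolding repj_def by simp

definition postU where
  "postU n m k X H F A rb W j mem mem' \<longleftrightarrow> cregs n m k X H F mem' \<and>
      arrs n m A X H F (repj A rb j n) W mem' \<and>
      mem' 10 = mem 10 \<and> mem' 11 = mem 11 \<and> mem' 12 = mem 12 \<and> mem' 13 = mem 13 \<and> mem' 21 = mem 21"

lemma loopU:
  "\<forall>i mem. i + r = n \<longrightarrow> lay n m X H F \<longrightarrow> cregs n m k X H F mem \<longrightarrow> arrs n m A X H F (repj A rb j i) W mem \<longrightarrow> j < m \<longrightarrow>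
    mem 13 = int (X + j) \<longrightarrow> mem 14 = int r \<longrightarrow> mem 15 = int (H + i) \<longrightarrow>
    mem 16 = int (X + j + i * m) \<longrightarrow>
    wpt prog (106, mem) (\<lambda>t c. t \<le> 10 * r + 1 \<and> fst c = 116 \<and> postU n m k X H F A rb W j mem (snd c))"
proof (induction r)
  case 0
  show ?case
    apply (intro allI impI)
    apply (rule wpt_step; simp)
    apply (rule wpt_done)
    apply (simp add: postU_def)
    done
next
  case (Suc r)
  show ?case
  proof (intro allI impI)
    fix i mem
    assume a: "i + Suc r = n" "lay n m X H F" "cregs n m k X H F mem" "arrs n m A X H F (repj A rb j i) W mem" "j < m"
      "mem 13 = int (X + j)" "mem 14 = int (Suc r)" "mem 15 = int (H + i)"
      "mem 16 = int (X + j + i * m)"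
    have i: "i < n" using a(1) by simp
    note cr = cregs_D[OF a(3)]
    have ly: "22 \<le> X" "22 \<le> H" using a(2) unfolding lay_def by auto
    have b: "mem (X + j + i * m) = (if j \<in> A i then 1 else 0)" using arrs_bit[OF a(4) i a(5)] .
    have rp: "mem (H + i) = int (rb i)" using arrs_rep[OF a(4) i] by (simp add: repj_self)
    note IH = Suc.IH[rule_format, where i="Suc i"]
    show "wpt prog (106, mem) (\<lambda>t c. t \<le> 10 * Suc r + 1 \<and> fst c = 116 \<and> postU n m k X H F A rb W j mem (snd c))"
    proof (cases "j \<in> A i")
      case False
      show ?thesis
        apply (rule wpt_step; simp add: a cr b rp ly False del: of_nat_add of_nat_mult)
        apply (rule wpt_step; simp add: a cr b rp ly False del: of_nat_add of_nat_mult)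
        apply (rule wpt_step; simp add: a cr b rp ly False del: of_nat_add of_nat_mult)
        apply (rule wpt_step; simp add: a cr b rp ly False del: of_nat_add of_nat_mult)
        apply (rule wpt_step; simp add: a cr b rp ly False del: of_nat_add of_nat_mult)
        apply (rule wpt_step; simp add: a cr b rp ly False del: of_nat_add of_nat_mult)
        apply (rule wpt_step; simp add: a cr b rp ly False del: of_nat_add of_nat_mult)
        apply (rule wpt_mono[OF IH])
        using a i by (auto simp: postU_def cr repj_Suc_out False)
    next
      case True
      have ar: "arrs n m A X H F (repj A rb j (Suc i)) W ((mem(18 := 1, 19 := int (rb i) + 1))(H + i := int (rb i) + 1))"
        using arrs_updH[OF a(2) _ i, of A "repj A rb j i" W "mem(18 := 1, 19 := int (rb i) + 1)" "rb i + 1"]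
          a(2,4) repj_Suc_in[of j A i rb, OF True] by (simp add: add.commute)
      show ?thesis
        apply (rule wpt_step; simp add: a cr b rp ly True del: of_nat_add of_nat_mult)
        apply (rule wpt_step; simp add: a cr b rp ly True del: of_nat_add of_nat_mult)
        apply (rule wpt_step; simp add: a cr b rp ly True del: of_nat_add of_nat_mult)
        apply (rule wpt_step; simp add: a cr b rp ly True del: of_nat_add of_nat_mult)
        apply (rule wpt_step; simp add: a cr b rp ly True del: of_nat_add of_nat_mult)
        apply (rule wpt_step; simp add: a cr b rp ly True del: of_nat_add of_nat_mult)
        apply (rule wpt_step; simp add: a cr b rp ly True del: of_nat_add of_nat_mult)
        apply (rule wpt_step; simp add: a cr b rp ly True del: of_nat_add of_nat_mult)
        apply (rule wpt_step; simp add: a cr b rp ly True del: of_nat_add of_nat_mult)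
        apply (rule wpt_step; simp add: a cr b rp ly True del: of_nat_add of_nat_mult)
        apply (rule wpt_mono[OF IH])
        using a i ar ly by (auto simp: postU_def cr True)
    qed
  qed
qed

lemma repj_0[simp]: "repj A rb j 0 = rb"
  unfolding repj_def by auto

lemma dcnt_cntr: "dcnt n A V l j = cntr n A (\<lambda>i. card (A i \<inter> V)) l j"
  unfolding dcnt_def cntr_def by simp

definition postJ where
  "postJ n m k X H F A l Wb mem mem' \<longleftrightarrow> cregs n m k X H F mem' \<and>
      arrs n m A X H F (\<lambda>i. card (A i \<inter> pass n k A l Wb m)) (pass n k A l Wb m) mem' \<and>
      mem' 10 = mem 10 \<and> mem' 21 = int (card (pass n k A l Wb m))"

lemma loopJ:
  "\<forall>j mem. j + r = m \<longrightarrow> lay n m X H F \<longrightarrow> cregs n m k X H F mem \<longrightarrow>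
    arrs n m A X H F (\<lambda>i. card (A i \<inter> pass n k A l Wb j)) (pass n k A l Wb j) mem \<longrightarrow>
    Wb \<subseteq> {..<m} \<longrightarrow> mem 10 = int l \<longrightarrow> mem 11 = int r \<longrightarrow> mem 12 = int (F + j) \<longrightarrow>
    mem 13 = int (X + j) \<longrightarrow> mem 21 = int (card (pass n k A l Wb j)) \<longrightarrow>
    wpt prog (76, mem) (\<lambda>t c. t \<le> r * (21 * n + 30) + 1 \<and> fst c = 120 \<and> postJ n m k X H F A l Wb mem (snd c))"
proof (induction r)
  case 0
  show ?case
    apply (intro allI impI)
    apply (rule wpt_step; simp)
    apply (rule wpt_done)
    apply (simp add: postJ_def)
    done
next
  case (Suc r)
  show ?case
  proof (intro allI impI)
    fix j mem
    assume a: "j + Suc r = m" "lay n m X H F" "cregs n m k X H F mem"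
      "arrs n m A X H F (\<lambda>i. card (A i \<inter> pass n k A l Wb j)) (pass n k A l Wb j) mem"
      "Wb \<subseteq> {..<m}" "mem 10 = int l" "mem 11 = int (Suc r)" "mem 12 = int (F + j)"
      "mem 13 = int (X + j)" "mem 21 = int (card (pass n k A l Wb j))"
    define V where "V = pass n k A l Wb j"
    define rp where "rp = (\<lambda>i. card (A i \<inter> V))"
    have jm: "j < m" using a(1) by simp
    have Vsub: "V \<subseteq> {..<m}" using pass_sub[of Wb n k A l j] a(5) jm unfolding V_def by auto
    have finV: "finite V" using Vsub finite_subset by blast
    note cr = cregs_D[OF a(3)]
    have ly: "22 \<le> X" "22 \<le> H" "22 \<le> F" using a(2) unfolding lay_def by auto
    have ar: "arrs n m A X H F rp V mem" using a(4) unfolding V_def rp_def .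
    have fl: "mem (F + j) = (if j \<in> V then 1 else 0)" using arrs_flag[OF ar jm] .
    have sz: "mem 21 = int (card V)" using a(10) unfolding V_def .
    note IH = Suc.IH[rule_format, where j="Suc j"]
    show "wpt prog (76, mem) (\<lambda>t c. t \<le> Suc r * (21 * n + 30) + 1 \<and> fst c = 120 \<and> postJ n m k X H F A l Wb mem (snd c))"
    proof (cases "j \<in> V")
      case True
      have pe: "pass n k A l Wb (Suc j) = V" using True by (simp add: V_def Let_def)
      show ?thesis
        apply (rule wpt_step; simp add: a cr fl sz ly True del: of_nat_add of_nat_mult)
        apply (rule wpt_step; simp add: a cr fl sz ly True del: of_nat_add of_nat_mult)
        apply (rule wpt_step; simp add: a cr fl sz ly True del: of_nat_add of_nat_mult)
        apply (rule wpt_step; simp add: a cr fl sz ly True del: of_nat_add of_nat_mult)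
        apply (rule wpt_step; simp add: a cr fl sz ly True del: of_nat_add of_nat_mult)
        apply (rule wpt_step; simp add: a cr fl sz ly True del: of_nat_add of_nat_mult)
        apply (rule wpt_step; simp add: a cr fl sz ly True del: of_nat_add of_nat_mult)
        apply (rule wpt_step; simp add: a cr fl sz ly True del: of_nat_add of_nat_mult)
        apply (rule wpt_mono[OF IH])
        using a ly True pe unfolding V_def by (auto simp: postJ_def cr)
    next
      case False
      have dc: "dcnt n A V l j = cntr n A rp l j" unfolding rp_def by (rule dcnt_cntr)
      have thr: "(int c * int k < int l * int n) = (\<not> l * n \<le> k * c)" for c
        by (simp add: mult.commute not_le flip: of_nat_mult)
      have pe_add: "l * n \<le> k * cntr n A rp l j \<Longrightarrow> pass n k A l Wb (Suc j) = insert j V"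
        using False dc by (simp add: V_def[symmetric] Let_def)
      have pe_skip: "\<not> l * n \<le> k * cntr n A rp l j \<Longrightarrow> pass n k A l Wb (Suc j) = V"
        using False dc by (simp add: V_def[symmetric] Let_def)
      have eqf: "arrs n m A X H F (repj A rp j n) (insert j V) = arrs n m A X H F (\<lambda>i. card (A i \<inter> insert j V)) (insert j V)"
      proof (rule arrs_cong)
        fix i assume "i < n"
        show "repj A rp j n i = card (A i \<inter> insert j V)"
        proof (cases "j \<in> A i")
          case True
          then have "A i \<inter> insert j V = insert j (A i \<inter> V)" by auto
          then show ?thesis using True \<open>i < n\<close> finV False unfolding repj_def rp_def by simp
        next
          case False2: False
          then have "A i \<inter> insert j V = A i \<inter> V" by auto
          then show ?thesis using False2 unfolding repj_def rp_def by simp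
        qed
      qed
      show ?thesis
        apply (rule wpt_step; simp add: a cr fl sz ly False del: of_nat_add of_nat_mult)
        apply (rule wpt_step; simp add: a cr fl sz ly False del: of_nat_add of_nat_mult)
        apply (rule wpt_step; simp add: a cr fl sz ly False del: of_nat_add of_nat_mult)
        apply (rule wpt_step; simp add: a cr fl sz ly False del: of_nat_add of_nat_mult)
        apply (rule wpt_step; simp add: a cr fl sz ly False del: of_nat_add of_nat_mult)
        apply (rule wpt_step; simp add: a cr fl sz ly False del: of_nat_add of_nat_mult)
        apply (rule wpt_step; simp add: a cr fl sz ly False del: of_nat_add of_nat_mult)
        apply (rule wpt_call[OF loopI[rule_format, where i=0 and r=n and n=n and m=m and k=k and X=X and H=H and F=F and A=A and rep=rp and W=V and j=j and l=l]])
        apply ((simp add: a cr ly ar jm; fail)+)[11]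
        apply (simp only: postI_def cregs_def)
        apply (elim conjE)
        apply (cases "l * n \<le> k * cntr n A rp l j")
        subgoal for t mem'
        apply (rule wpt_step; simp add: a cr fl sz ly False thr V_def[symmetric] del: of_nat_add of_nat_mult)
        apply (rule wpt_step; simp add: a cr fl sz ly False thr V_def[symmetric] del: of_nat_add of_nat_mult)
        apply (rule wpt_step; simp add: a cr fl sz ly False thr V_def[symmetric] del: of_nat_add of_nat_mult)
        apply (rule wpt_step; simp add: a cr fl sz ly False thr V_def[symmetric] del: of_nat_add of_nat_mult)
        apply (rule wpt_step; simp add: a cr fl sz ly False thr V_def[symmetric] del: of_nat_add of_nat_mult)
        apply (rule wpt_step; simp add: a cr fl sz ly False thr V_def[symmetric] del: of_nat_add of_nat_mult)
        apply (rule wpt_step; simp add: a cr fl sz ly False thr V_def[symmetric] del: of_nat_add of_nat_mult)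
        apply (rule wpt_step; simp add: a cr fl sz ly False thr V_def[symmetric] del: of_nat_add of_nat_mult)
        apply (rule wpt_step; simp add: a cr fl sz ly False thr V_def[symmetric] del: of_nat_add of_nat_mult)
        apply (rule wpt_step; simp add: a cr fl sz ly False thr V_def[symmetric] del: of_nat_add of_nat_mult)
          apply (rule wpt_call[OF loopU[rule_format, where i=0 and r=n and n=n and m=m and k=k and X=X and H=H and F=F and A=A and rb=rp and W="insert j V" and j=j]])
          apply ((simp add: a cr ly ar jm cregs_def; fail)+)[9]
          apply (simp only: postU_def cregs_def)
          apply (elim conjE)
        apply (rule wpt_step; simp add: a cr fl sz ly False thr V_def[symmetric] del: of_nat_add of_nat_mult)
        apply (rule wpt_step; simp add: a cr fl sz ly False thr V_def[symmetric] del: of_nat_add of_nat_mult)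
        apply (rule wpt_step; simp add: a cr fl sz ly False thr V_def[symmetric] del: of_nat_add of_nat_mult)
        apply (rule wpt_step; simp add: a cr fl sz ly False thr V_def[symmetric] del: of_nat_add of_nat_mult)
          apply (rule wpt_mono[OF IH])
          using a jm ly finV False Vsub by (auto simp: pe_add eqf postJ_def cregs_def simp del: pass.simps)
        subgoal for t mem'
        apply (rule wpt_step; simp add: a cr fl sz ly False thr V_def[symmetric] del: of_nat_add of_nat_mult)
        apply (rule wpt_step; simp add: a cr fl sz ly False thr V_def[symmetric] del: of_nat_add of_nat_mult)
        apply (rule wpt_step; simp add: a cr fl sz ly False thr V_def[symmetric] del: of_nat_add of_nat_mult)
        apply (rule wpt_step; simp add: a cr fl sz ly False thr V_def[symmetric] del: of_nat_add of_nat_mult)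
        apply (rule wpt_step; simp add: a cr fl sz ly False thr V_def[symmetric] del: of_nat_add of_nat_mult)
        apply (rule wpt_step; simp add: a cr fl sz ly False thr V_def[symmetric] del: of_nat_add of_nat_mult)
        apply (rule wpt_step; simp add: a cr fl sz ly False thr V_def[symmetric] del: of_nat_add of_nat_mult)
        apply (rule wpt_step; simp add: a cr fl sz ly False thr V_def[symmetric] del: of_nat_add of_nat_mult)
          apply (rule wpt_mono[OF IH])
          using a jm ly finV False Vsub by (auto simp: pe_skip postJ_def cregs_def rp_def simp del: pass.simps)
        done
    qed
  qed
qed

definition postV where
  "postV n m k X H F A l W mem' \<longleftrightarrow> cregs n m k X H F mem' \<and>
      arrs n m A X H F (\<lambda>i. card (A i \<inter> lev n m k A l W)) (lev n m k A l W) mem' \<and>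
      mem' 21 = int (card (lev n m k A l W))"

lemma loopV:
  "\<forall>W mem. lay n m X H F \<longrightarrow> cregs n m k X H F mem \<longrightarrow>
    arrs n m A X H F (\<lambda>i. card (A i \<inter> W)) W mem \<longrightarrow>
    W \<subseteq> {..<m} \<longrightarrow> mem 10 = int l \<longrightarrow> mem 21 = int (card W) \<longrightarrow>
    wpt prog (71, mem) (\<lambda>t c. t \<le> l * (m * (21 * n + 30) + 8) + 1 \<and> fst c = 122 \<and> postV n m k X H F A l W (snd c))"
proof (induction l)
  case 0
  show ?case
    apply (intro allI impI)
    apply (rule wpt_step; simp)
    apply (rule wpt_done)
    apply (simp add: postV_def)
    done
next
  case (Suc l)
  show ?case
  proof (intro allI impI)
    fix W mem
    assume a: "lay n m X H F" "cregs n m k X H F mem"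
      "arrs n m A X H F (\<lambda>i. card (A i \<inter> W)) W mem"
      "W \<subseteq> {..<m}" "mem 10 = int (Suc l)" "mem 21 = int (card W)"
    note cr = cregs_D[OF a(2)]
    have ly: "22 \<le> X" "22 \<le> H" "22 \<le> F" using a(1) unfolding lay_def by auto
    have ps: "pass n k A (Suc l) W m \<subseteq> {..<m}" using pass_sub[of W n k A "Suc l" m] a(4) by auto
    note IH = Suc.IH[rule_format, where W="pass n k A (Suc l) W m"]
    show "wpt prog (71, mem) (\<lambda>t c. t \<le> Suc l * (m * (21 * n + 30) + 8) + 1 \<and> fst c = 122 \<and> postV n m k X H F A (Suc l) W (snd c))"
      apply (rule wpt_step; simp add: a cr ly del: of_nat_add of_nat_mult)
      apply (rule wpt_step; simp add: a cr ly del: of_nat_add of_nat_mult)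
      apply (rule wpt_step; simp add: a cr ly del: of_nat_add of_nat_mult)
      apply (rule wpt_step; simp add: a cr ly del: of_nat_add of_nat_mult)
      apply (rule wpt_step; simp add: a cr ly del: of_nat_add of_nat_mult)
      apply (rule wpt_call[OF loopJ[rule_format, where j=0 and r=m and n=n and m=m and k=k and X=X and H=H and F=F and A=A and l="Suc l" and Wb=W]])
      apply ((simp add: a cr ly cregs_def; fail)+)[10]
      apply (simp only: postJ_def cregs_def)
      apply (elim conjE)
      apply (rule wpt_step; simp add: a cr ly del: of_nat_add of_nat_mult)
      apply (rule wpt_step; simp add: a cr ly del: of_nat_add of_nat_mult)
      apply (rule wpt_mono[OF IH])
      using a ly ps by (auto simp: postV_def cregs_def simp del: pass.simps)
  qed
qed

definition postF where
  "postF n m k X H F A rep W mem' \<longleftrightarrow> cregs n m k X H F mem' \<and>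
      arrs n m A X H F rep (fillf k W m) mem'"

lemma loopF:
  "\<forall>j mem. j + r = m \<longrightarrow> lay n m X H F \<longrightarrow> cregs n m k X H F mem \<longrightarrow>
    arrs n m A X H F rep (fillf k W j) mem \<longrightarrow> W \<subseteq> {..<m} \<longrightarrow>
    mem 11 = int r \<longrightarrow> mem 12 = int (F + j) \<longrightarrow> mem 21 = int (card (fillf k W j)) \<longrightarrow>
    wpt prog (125, mem) (\<lambda>t c. t \<le> 10 * r + 4 \<and> fst c = 137 \<and> postF n m k X H F A rep W (snd c))"
proof (induction r)
  case 0
  show ?case
    apply (intro allI impI)
    apply (rule wpt_step; simp)
    apply (rule wpt_done)
    apply (simp add: postF_def)
    done
next
  case (Suc r)
  show ?case
  proof (intro allI impI)
    fix j mem
    assume a: "j + Suc r = m" "lay n m X H F" "cregs n m k X H F mem"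
      "arrs n m A X H F rep (fillf k W j) mem" "W \<subseteq> {..<m}"
      "mem 11 = int (Suc r)" "mem 12 = int (F + j)" "mem 21 = int (card (fillf k W j))"
    define V where "V = fillf k W j"
    have jm: "j < m" using a(1) by simp
    have Vsub: "V \<subseteq> {..<m}" using fillf_sub[of W k j] a(5) jm unfolding V_def by auto
    have finV: "finite V" using Vsub finite_subset by blast
    note cr = cregs_D[OF a(3)]
    have ly: "22 \<le> X" "22 \<le> H" "22 \<le> F" using a(2) unfolding lay_def by auto
    have ar: "arrs n m A X H F rep V mem" using a(4) unfolding V_def .
    have fl: "mem (F + j) = (if j \<in> V then 1 else 0)" using arrs_flag[OF ar jm] .
    have sz: "mem 21 = int (card V)" using a(8) unfolding V_def .
    note IH = Suc.IH[rule_format, where j="Suc j"]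
    show "wpt prog (125, mem) (\<lambda>t c. t \<le> 10 * Suc r + 4 \<and> fst c = 137 \<and> postF n m k X H F A rep W (snd c))"
    proof (cases "card V < k")
      case False
      have st: "fillf k W m = V"
        using fillf_stop[of k W j "Suc r"] False a(1) unfolding V_def by (simp del: fillf.simps)
      show ?thesis
        apply (rule wpt_step; simp add: a cr fl sz ly V_def[symmetric] False del: of_nat_add of_nat_mult)
        apply (rule wpt_step; simp add: a cr fl sz ly V_def[symmetric] False del: of_nat_add of_nat_mult)
        apply (rule wpt_step; simp add: a cr fl sz ly V_def[symmetric] False del: of_nat_add of_nat_mult)
        apply (rule wpt_step; simp add: a cr fl sz ly V_def[symmetric] False del: of_nat_add of_nat_mult)
        apply (rule wpt_done)
        using st a ar by (simp add: postF_def)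
    next
      case lt: True
      show ?thesis
      proof (cases "j \<in> V")
        case True
        have pe: "fillf k W (Suc j) = V" using True by (simp add: V_def Let_def)
        show ?thesis
        apply (rule wpt_step; simp add: a cr fl sz ly V_def[symmetric] lt True del: of_nat_add of_nat_mult)
        apply (rule wpt_step; simp add: a cr fl sz ly V_def[symmetric] lt True del: of_nat_add of_nat_mult)
        apply (rule wpt_step; simp add: a cr fl sz ly V_def[symmetric] lt True del: of_nat_add of_nat_mult)
        apply (rule wpt_step; simp add: a cr fl sz ly V_def[symmetric] lt True del: of_nat_add of_nat_mult)
        apply (rule wpt_step; simp add: a cr fl sz ly V_def[symmetric] lt True del: of_nat_add of_nat_mult)
        apply (rule wpt_step; simp add: a cr fl sz ly V_def[symmetric] lt True del: of_nat_add of_nat_mult)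
        apply (rule wpt_step; simp add: a cr fl sz ly V_def[symmetric] lt True del: of_nat_add of_nat_mult)
        apply (rule wpt_step; simp add: a cr fl sz ly V_def[symmetric] lt True del: of_nat_add of_nat_mult)
        apply (rule wpt_step; simp add: a cr fl sz ly V_def[symmetric] lt True del: of_nat_add of_nat_mult)
          apply (rule wpt_mono[OF IH])
          using a ly pe ar by (auto simp: postF_def cregs_def V_def simp del: fillf.simps)
      next
        case False
        have pe: "fillf k W (Suc j) = insert j V" using False lt by (simp add: V_def Let_def)
        have cI: "card (insert j V) = card V + 1" using finV False by simp
        show ?thesis
        apply (rule wpt_step; simp add: a cr fl sz ly V_def[symmetric] lt False del: of_nat_add of_nat_mult)
        apply (rule wpt_step; simp add: a cr fl sz ly V_def[symmetric] lt False del: of_nat_add of_nat_mult)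
        apply (rule wpt_step; simp add: a cr fl sz ly V_def[symmetric] lt False del: of_nat_add of_nat_mult)
        apply (rule wpt_step; simp add: a cr fl sz ly V_def[symmetric] lt False del: of_nat_add of_nat_mult)
        apply (rule wpt_step; simp add: a cr fl sz ly V_def[symmetric] lt False del: of_nat_add of_nat_mult)
        apply (rule wpt_step; simp add: a cr fl sz ly V_def[symmetric] lt False del: of_nat_add of_nat_mult)
        apply (rule wpt_step; simp add: a cr fl sz ly V_def[symmetric] lt False del: of_nat_add of_nat_mult)
        apply (rule wpt_step; simp add: a cr fl sz ly V_def[symmetric] lt False del: of_nat_add of_nat_mult)
        apply (rule wpt_step; simp add: a cr fl sz ly V_def[symmetric] lt False del: of_nat_add of_nat_mult)
        apply (rule wpt_step; simp add: a cr fl sz ly V_def[symmetric] lt False del: of_nat_add of_nat_mult)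
          apply (rule wpt_mono[OF IH])
          using a ly pe ar cI jm by (auto simp: postF_def cregs_def simp del: fillf.simps)
      qed
    qed
  qed
qed

lemma loopO:
  "\<forall>j mem. j + r = m \<longrightarrow> 1 \<le> n * m \<longrightarrow> 3 + n * m + m \<le> F \<longrightarrow> 22 \<le> F \<longrightarrow>
    (\<forall>j'<m. mem (F + j') = fl j') \<longrightarrow> (\<forall>j'<j. mem (3 + n * m + j') = fl j') \<longrightarrow>
    mem 0 = int (3 + n * m + j) \<longrightarrow> mem 1 = int (F + j) \<longrightarrow> mem 2 = int r \<longrightarrow>
    wpt prog (144, mem) (\<lambda>t c. t \<le> 8 * r + 1 \<and> fst c = 152 \<and> (\<forall>j'<m. snd c (3 + n * m + j') = fl j'))"
proof (induction r)
  case 0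
  show ?case
    apply (intro allI impI)
    apply (rule wpt_step; simp)
    apply (rule wpt_done)
    apply simp
    done
next
  case (Suc r)
  show ?case
  proof (intro allI impI)
    fix j mem
    assume a: "j + Suc r = m" "1 \<le> n * m" "3 + n * m + m \<le> F" "22 \<le> F"
      "\<forall>j'<m. mem (F + j') = fl j'" "\<forall>j'<j. mem (3 + n * m + j') = fl j'"
      "mem 0 = int (3 + n * m + j)" "mem 1 = int (F + j)" "mem 2 = int (Suc r)"
    have jm: "j < m" using a(1) by simp
    have fj: "mem (F + j) = fl j" using a(5) jm by simp
    have m1: "mem (Suc 0) = int (F + j)" using a(8) by simp
    note IH = Suc.IH[rule_format, where j="Suc j"]
    show "wpt prog (144, mem) (\<lambda>t c. t \<le> 8 * Suc r + 1 \<and> fst c = 152 \<and> (\<forall>j'<m. snd c (3 + n * m + j') = fl j'))"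
      apply (rule wpt_step; simp add: a fj m1 del: of_nat_add of_nat_mult)
      apply (rule wpt_step; simp add: a fj m1 del: of_nat_add of_nat_mult)
      apply (rule wpt_step; simp add: a fj m1 del: of_nat_add of_nat_mult)
      apply (rule wpt_step; simp add: a fj m1 del: of_nat_add of_nat_mult)
      apply (rule wpt_step; simp add: a fj m1 del: of_nat_add of_nat_mult)
      apply (rule wpt_step; simp add: a fj m1 del: of_nat_add of_nat_mult)
      apply (rule wpt_step; simp add: a fj m1 del: of_nat_add of_nat_mult)
      apply (rule wpt_step; simp add: a fj m1 del: of_nat_add of_nat_mult)
      apply (rule wpt_mono[OF IH])
      using a jm fj by (auto simp: less_Suc_eq)
  qed
qed

lemma tail:
  assumes a: "lay n m X H F" "cregs n m k X H F mem" "arrs n m A X H F rep W mem" "W \<subseteq> {..<m}"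
    "mem 21 = int (card W)" "1 \<le> n * m" "3 + n * m + m \<le> X"
  shows "wpt prog (122, mem) (\<lambda>t c. t \<le> 18 * m + 20 \<and> fst c = 152 \<and>
     (\<forall>j<m. snd c (3 + n * m + j) = (if j \<in> fillf k W m then 1 else 0)))"
proof -
  note cr = cregs_D[OF a(2)]
  have ly: "22 \<le> X" "22 \<le> H" "22 \<le> F" "X \<le> F" using a(1) unfolding lay_def by auto
  have XF: "3 + n * m + m \<le> F" using a(7) ly(4) by linarith
  show ?thesis
    apply (rule wpt_step; simp add: a cr ly del: of_nat_add of_nat_mult)
    apply (rule wpt_step; simp add: a cr ly del: of_nat_add of_nat_mult)
    apply (rule wpt_step; simp add: a cr ly del: of_nat_add of_nat_mult)
    apply (rule wpt_call[OF loopF[rule_format, where j=0 and r=m and n=n and m=m and k=k and X=X and H=H and F=F and A=A and rep=rep and W=W]])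
    apply ((simp add: a cr ly cregs_def; fail)+)[8]
    apply (simp only: postF_def cregs_def)
    apply (elim conjE)
    apply (rule wpt_step; simp add: a cr ly del: of_nat_add of_nat_mult)
    apply (rule wpt_step; simp add: a cr ly del: of_nat_add of_nat_mult)
    apply (rule wpt_step; simp add: a cr ly del: of_nat_add of_nat_mult)
    apply (rule wpt_step; simp add: a cr ly del: of_nat_add of_nat_mult)
    apply (rule wpt_step; simp add: a cr ly del: of_nat_add of_nat_mult)
    apply (rule wpt_step; simp add: a cr ly del: of_nat_add of_nat_mult)
    apply (rule wpt_step; simp add: a cr ly del: of_nat_add of_nat_mult)
    apply (rule wpt_call[OF loopO[rule_format, where j=0 and r=m and n=n and m=m and F=F and fl="\<lambda>j. if j \<in> fillf k W m then 1 else 0"]])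
    apply (use a ly XF in \<open>auto simp: arrs_def\<close>)[6]
    apply (simp add: a cr ly XF arrs_def algebra_simps)
    apply (simp add: a cr ly XF arrs_def algebra_simps)
    apply (simp add: a cr ly XF arrs_def algebra_simps)
    apply (rule wpt_done)
    by auto
qed

definition Xv :: "nat \<Rightarrow> nat \<Rightarrow> nat \<Rightarrow> nat" where
  "Xv n m k = 32 * ((k * (n + m) + n) * (n + m))"

lemma init012[simp]: "init_mem n m A k 0 = int n" "init_mem n m A k (Suc 0) = int m" "init_mem n m A k 2 = int k"
  unfolding init_mem_def by auto

lemma prog_fetch1[simp]: "prog ! Suc 0 = Mul 2 2 1" by (simp add: prog_def)

definition postA where
  "postA n m k A mem \<longleftrightarrow> mem 0 = int (Xv n m k) \<and> mem 1 = int (n + m) \<and> mem 2 = int (k * (n + m) + n) \<and>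
     (\<forall>a. 3 \<le> a \<longrightarrow> mem a = init_mem n m A k a)"

lemma segA: "wpt prog (0, init_mem n m A k) (\<lambda>t c. t \<le> 9 \<and> fst c = 9 \<and> postA n m k A (snd c))"
  apply (rule wpt_step; simp add: numeral_2_eq_2[symmetric])
  apply (rule wpt_step; simp add: numeral_2_eq_2[symmetric])
  apply (rule wpt_step; simp add: numeral_2_eq_2[symmetric])
  apply (rule wpt_step; simp add: numeral_2_eq_2[symmetric])
  apply (rule wpt_step; simp add: numeral_2_eq_2[symmetric])
  apply (rule wpt_step; simp add: numeral_2_eq_2[symmetric])
  apply (rule wpt_step; simp add: numeral_2_eq_2[symmetric])
  apply (rule wpt_step; simp add: numeral_2_eq_2[symmetric])
  apply (rule wpt_step; simp add: numeral_2_eq_2[symmetric])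
  apply (rule wpt_done)
  apply (simp add: postA_def Xv_def algebra_simps)
  done

lemma Xv_big: "1 \<le> n \<Longrightarrow> 1 \<le> m \<Longrightarrow> 1 \<le> k \<Longrightarrow> n * m + m + 186 \<le> Xv n m k"
proof -
  assume a: "1 \<le> n" "1 \<le> m" "1 \<le> k"
  define s where "s = n + m"
  define P where "P = (k * s + n) * s"
  have s2: "2 \<le> s" using a unfolding s_def by simp
  have ks: "s \<le> k * s" using a(3) by simp
  have e: "s + 1 \<le> k * s + n" using ks a(1) by linarith
  have P1: "(s + 1) * s \<le> P" unfolding P_def using e by (rule mult_le_mono1)
  have P2: "(s + 1) * s = s * s + s" by (simp add: algebra_simps)
  have P3: "3 * 2 \<le> (s + 1) * s" using s2 by (intro mult_le_mono) auto
  have mm: "m \<le> m * m" using a(2) by simp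
  have ss: "s * s = n * n + 2 * (n * m) + m * m" unfolding s_def by (simp add: algebra_simps)
  have nn: "0 \<le> n * n" by simp
  have "n * m + m \<le> s * s" using ss mm by linarith
  then have "n * m + m \<le> P" using P1 P2 by linarith
  moreover have "6 \<le> P" using P1 P3 by linarith
  moreover have "Xv n m k = 32 * P" unfolding Xv_def P_def s_def by simp
  ultimately show ?thesis by linarith
qed

lemma nat_int_plus[simp]:
  "nat (int x + 1) = x + 1" "nat (int x + numeral c) = x + numeral c" "nat (numeral c + int x) = x + numeral c"
  "nat (1 + int x) = x + 1"
proof -
  show "nat (int x + 1) = x + 1" by simp
  show "nat (1 + int x) = x + 1" by simp
  have "int x + numeral c = int (x + numeral c)" by simp
  then show "nat (int x + numeral c) = x + numeral c" by (simp only: nat_int)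
  then show "nat (numeral c + int x) = x + numeral c" by (simp only: add.commute)
qed

lemma far_neq2[simp]:
  "22 \<le> (x::nat) \<Longrightarrow> (a::nat) < 22 \<Longrightarrow> (a = x) = False"
  "22 \<le> (x::nat) \<Longrightarrow> (a::nat) < 22 \<Longrightarrow> (a = x + y) = False"
  by auto

lemma lt19: "i < (19::nat) \<Longrightarrow> i = 0 \<or> i = 1 \<or> i = 2 \<or> i = 3 \<or> i = 4 \<or> i = 5 \<or> i = 6 \<or> i = 7 \<or> i = 8 \<or> i = 9 \<or>
  i = 10 \<or> i = 11 \<or> i = 12 \<or> i = 13 \<or> i = 14 \<or> i = 15 \<or> i = 16 \<or> i = 17 \<or> i = 18"
  by presburger

definition postB where
  "postB n m k A mem \<longleftrightarrow> mem 0 = int (Xv n m k + 18) \<and> mem 1 = int (n + m) \<and> mem 2 = int (k * (n + m) + n) \<and>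
     mem 3 = 1 \<and> (\<forall>i<19. mem (Xv n m k + i) = init_mem n m A k (3 + i)) \<and>
     (\<forall>a. 22 \<le> a \<longrightarrow> (a < Xv n m k \<or> Xv n m k + 19 \<le> a) \<longrightarrow> mem a = init_mem n m A k a)"

lemma segB: "1 \<le> n \<Longrightarrow> 1 \<le> m \<Longrightarrow> 1 \<le> k \<Longrightarrow> postA n m k A mem \<Longrightarrow>
   wpt prog (9, mem) (\<lambda>t c. t \<le> 38 \<and> fst c = 47 \<and> postB n m k A (snd c))"
proof -
  assume a: "1 \<le> n" "1 \<le> m" "1 \<le> k" "postA n m k A mem"
  define X where "X = Xv n m k"
  have X22: "22 \<le> X" using Xv_big[OF a(1-3)] unfolding X_def by linarith
  have pa: "mem 0 = int X" "mem (Suc 0) = int (n + m)" "mem 2 = int (k * (n + m) + n)"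
      "\<forall>a. 3 \<le> a \<longrightarrow> mem a = init_mem n m A k a" using a(4) unfolding postA_def X_def by auto
  show ?thesis
    apply (rule wpt_step; simp add: pa X22)
    apply (rule wpt_step; simp add: pa X22)
    apply (rule wpt_step; simp add: pa X22)
    apply (rule wpt_step; simp add: pa X22)
    apply (rule wpt_step; simp add: pa X22)
    apply (rule wpt_step; simp add: pa X22)
    apply (rule wpt_step; simp add: pa X22)
    apply (rule wpt_step; simp add: pa X22)
    apply (rule wpt_step; simp add: pa X22)
    apply (rule wpt_step; simp add: pa X22)
    apply (rule wpt_step; simp add: pa X22)
    apply (rule wpt_step; simp add: pa X22)
    apply (rule wpt_step; simp add: pa X22)
    apply (rule wpt_step; simp add: pa X22)
    apply (rule wpt_step; simp add: pa X22)
    apply (rule wpt_step; simp add: pa X22)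
    apply (rule wpt_step; simp add: pa X22)
    apply (rule wpt_step; simp add: pa X22)
    apply (rule wpt_step; simp add: pa X22)
    apply (rule wpt_step; simp add: pa X22)
    apply (rule wpt_step; simp add: pa X22)
    apply (rule wpt_step; simp add: pa X22)
    apply (rule wpt_step; simp add: pa X22)
    apply (rule wpt_step; simp add: pa X22)
    apply (rule wpt_step; simp add: pa X22)
    apply (rule wpt_step; simp add: pa X22)
    apply (rule wpt_step; simp add: pa X22)
    apply (rule wpt_step; simp add: pa X22)
    apply (rule wpt_step; simp add: pa X22)
    apply (rule wpt_step; simp add: pa X22)
    apply (rule wpt_step; simp add: pa X22)
    apply (rule wpt_step; simp add: pa X22)
    apply (rule wpt_step; simp add: pa X22)
    apply (rule wpt_step; simp add: pa X22)
    apply (rule wpt_step; simp add: pa X22)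
    apply (rule wpt_step; simp add: pa X22)
    apply (rule wpt_step; simp add: pa X22)
    apply (rule wpt_step; simp add: pa X22)
    apply (rule wpt_done)
    apply (simp only: postB_def X_def[symmetric] snd_conv)
    apply (intro conjI allI impI)
    apply (simp_all add: pa X22)
    apply (auto simp: pa X22 dest!: lt19)
    done
qed

lemma loopC:
  "\<forall>idx mem. idx + r = n * m \<longrightarrow> 19 \<le> idx \<longrightarrow> 3 + n * m \<le> X \<longrightarrow> lay n m X H F \<longrightarrow> cregs n m k X H F mem \<longrightarrow>
    (\<forall>i<idx. mem (X + i) = init_mem n m A k (3 + i)) \<longrightarrow>
    (\<forall>a. 22 \<le> a \<longrightarrow> (a < X \<or> X + idx \<le> a) \<longrightarrow> mem a = init_mem n m A k a) \<longrightarrow>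
    mem 14 = int r \<longrightarrow> mem 15 = int (3 + idx) \<longrightarrow> mem 16 = int (X + idx) \<longrightarrow>
    wpt prog (62, mem) (\<lambda>t c. t \<le> 7 * r + 1 \<and> fst c = 69 \<and> cregs n m k X H F (snd c) \<and>
      (\<forall>i<n * m. snd c (X + i) = init_mem n m A k (3 + i)) \<and>
      (\<forall>a. 22 \<le> a \<longrightarrow> (a < X \<or> X + n * m \<le> a) \<longrightarrow> snd c a = init_mem n m A k a))"
proof (induction r)
  case 0
  show ?case
    apply (intro allI impI)
    apply (rule wpt_step; simp)
    apply (rule wpt_done)
    apply simp
    done
next
  case (Suc r)
  show ?case
  proof (intro allI impI)
    fix idx mem
    assume a: "idx + Suc r = n * m" "19 \<le> idx" "3 + n * m \<le> X" "lay n m X H F" "cregs n m k X H F mem"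
      "\<forall>i<idx. mem (X + i) = init_mem n m A k (3 + i)"
      "\<forall>a. 22 \<le> a \<longrightarrow> (a < X \<or> X + idx \<le> a) \<longrightarrow> mem a = init_mem n m A k a"
      "mem 14 = int (Suc r)" "mem 15 = int (3 + idx)" "mem 16 = int (X + idx)"
    note cr = cregs_D[OF a(5)]
    have ly: "22 \<le> X" using a(4) unfolding lay_def by auto
    have src: "mem (3 + idx) = init_mem n m A k (3 + idx)" using a(7) a(1-3) by auto
    note IH = Suc.IH[rule_format, where idx="Suc idx"]
    show "wpt prog (62, mem) (\<lambda>t c. t \<le> 7 * Suc r + 1 \<and> fst c = 69 \<and> cregs n m k X H F (snd c) \<and>
      (\<forall>i<n * m. snd c (X + i) = init_mem n m A k (3 + i)) \<and>
      (\<forall>a. 22 \<le> a \<longrightarrow> (a < X \<or> X + n * m \<le> a) \<longrightarrow> snd c a = init_mem n m A k a))"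
      apply (rule wpt_step; simp add: a cr ly src del: of_nat_add of_nat_mult)
      apply (rule wpt_step; simp add: a cr ly src del: of_nat_add of_nat_mult)
      apply (rule wpt_step; simp add: a cr ly src del: of_nat_add of_nat_mult)
      apply (rule wpt_step; simp add: a cr ly src del: of_nat_add of_nat_mult)
      apply (rule wpt_step; simp add: a cr ly src del: of_nat_add of_nat_mult)
      apply (rule wpt_step; simp add: a cr ly src del: of_nat_add of_nat_mult)
      apply (rule wpt_step; simp add: a cr ly src del: of_nat_add of_nat_mult)
      apply (rule wpt_mono[OF IH])
      using a ly by (auto simp: cregs_def less_Suc_eq)
  qed
qed

lemma arrs_init:
  assumes "H = X + n * m + 19" "F = H + n" "3 + n * m \<le> X"
    "\<forall>i<n * m. mem (X + i) = init_mem n m A k (3 + i)"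
    "\<forall>a. X + n * m + 19 \<le> a \<longrightarrow> mem a = init_mem n m A k a"
  shows "arrs n m A X H F (\<lambda>i. 0) {} mem"
  unfolding arrs_def
proof (intro conjI allI impI)
  fix idx assume i: "idx < n * m"
  then show "mem (X + idx) = bitv A m idx" using assms(4) unfolding init_mem_def bitv_def by auto
next
  fix i assume "i < n"
  then show "mem (H + i) = int ((\<lambda>i. 0) i)" using assms unfolding init_mem_def by auto
next
  fix j assume "j < m"
  then show "mem (F + j) = (if j \<in> {} then 1 else 0)" using assms unfolding init_mem_def by auto
qed

definition postH where
  "postH n m k A mem \<longleftrightarrow> (let X = Xv n m k; H = Xv n m k + n * m + 19; F = Xv n m k + n * m + 19 + n in
     lay n m X H F \<and> cregs n m k X H F mem \<and> arrs n m A X H F (\<lambda>i. card (A i \<inter> {})) {} mem \<and>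
     mem 10 = int k \<and> mem 21 = int (card ({}::nat set)))"

lemma kdiv: "(int k * (int n + int m) + int n) div (int n + int m) = int k" if "1 \<le> m"
proof -
  have "(int n + int m) > 0" using that by simp
  moreover have "0 \<le> int n" "int n < int n + int m" using that by auto
  ultimately show ?thesis by (simp add: div_add_self2 mult.commute)
qed

lemma segC: "1 \<le> n \<Longrightarrow> 1 \<le> m \<Longrightarrow> 1 \<le> k \<Longrightarrow> postB n m k A mem \<Longrightarrow>
   wpt prog (47, mem) (\<lambda>t c. t \<le> 7 * (n * m) + 30 \<and> fst c = 71 \<and> postH n m k A (snd c))"
proof -
  assume a: "1 \<le> n" "1 \<le> m" "1 \<le> k" "postB n m k A mem"
  define X where "X = Xv n m k"
  define H where "H = X + n * m + 19"
  define F where "F = H + n"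
  have XB: "n * m + m + 186 \<le> X" using Xv_big[OF a(1-3)] unfolding X_def .
  have X22: "22 \<le> X" using XB by linarith
  have lay: "lay n m X H F" unfolding lay_def H_def F_def using X22 by simp
  define si where "si = int n + int m"
  define ei where "ei = int k * si + int n"
  have pb: "mem 0 = int X + 18" "mem (Suc 0) = si" "mem 2 = ei" "mem 3 = 1"
    "\<forall>i<19. mem (X + i) = init_mem n m A k (3 + i)"
    "\<forall>a. 22 \<le> a \<longrightarrow> (a < X \<or> X + 19 \<le> a) \<longrightarrow> mem a = init_mem n m A k a"
    using a(4) unfolding postB_def X_def si_def ei_def by (auto simp: algebra_simps)
  have kd: "ei div si = int k" "ei - int k * si = int n" "si - int n = int m"
    using kdiv[OF a(2), of k n] unfolding ei_def si_def by (auto simp: algebra_simps)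
  have nm19: "(int n * int m < 19) = (n * m < 19)"
  proof -
    have "int n * int m = int (n * m)" by simp
    then show ?thesis by linarith
  qed
  show ?thesis
  proof (cases "n * m < 19")
    case True
    have arr0: "arrs n m A X H F (\<lambda>i. 0) {} mem"
      apply (rule arrs_init[OF H_def F_def])
      using XB True pb(5,6) by auto
    show ?thesis
      apply (rule wpt_step; simp add: pb kd nm19 X22 True del: of_nat_add of_nat_mult)
      apply (rule wpt_step; simp add: pb kd nm19 X22 True del: of_nat_add of_nat_mult)
      apply (rule wpt_step; simp add: pb kd nm19 X22 True del: of_nat_add of_nat_mult)
      apply (rule wpt_step; simp add: pb kd nm19 X22 True del: of_nat_add of_nat_mult)
      apply (rule wpt_step; simp add: pb kd nm19 X22 True del: of_nat_add of_nat_mult)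
      apply (rule wpt_step; simp add: pb kd nm19 X22 True del: of_nat_add of_nat_mult)
      apply (rule wpt_step; simp add: pb kd nm19 X22 True del: of_nat_add of_nat_mult)
      apply (rule wpt_step; simp add: pb kd nm19 X22 True del: of_nat_add of_nat_mult)
      apply (rule wpt_step; simp add: pb kd nm19 X22 True del: of_nat_add of_nat_mult)
      apply (rule wpt_step; simp add: pb kd nm19 X22 True del: of_nat_add of_nat_mult)
      apply (rule wpt_step; simp add: pb kd nm19 X22 True del: of_nat_add of_nat_mult)
      apply (rule wpt_step; simp add: pb kd nm19 X22 True del: of_nat_add of_nat_mult)
      apply (rule wpt_step; simp add: pb kd nm19 X22 True del: of_nat_add of_nat_mult)
      apply (rule wpt_step; simp add: pb kd nm19 X22 True del: of_nat_add of_nat_mult)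
      apply (rule wpt_step; simp add: pb kd nm19 X22 True del: of_nat_add of_nat_mult)
      apply (rule wpt_done)
      apply (simp add: postH_def Let_def X_def[symmetric] H_def[symmetric] F_def[symmetric] lay cregs_def)
      using pb(4) arr0 unfolding H_def F_def by simp
  next
    case False
    show ?thesis
      apply (rule wpt_step; simp add: pb kd nm19 X22 False del: of_nat_add of_nat_mult)
      apply (rule wpt_step; simp add: pb kd nm19 X22 False del: of_nat_add of_nat_mult)
      apply (rule wpt_step; simp add: pb kd nm19 X22 False del: of_nat_add of_nat_mult)
      apply (rule wpt_step; simp add: pb kd nm19 X22 False del: of_nat_add of_nat_mult)
      apply (rule wpt_step; simp add: pb kd nm19 X22 False del: of_nat_add of_nat_mult)
      apply (rule wpt_step; simp add: pb kd nm19 X22 False del: of_nat_add of_nat_mult)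
      apply (rule wpt_step; simp add: pb kd nm19 X22 False del: of_nat_add of_nat_mult)
      apply (rule wpt_step; simp add: pb kd nm19 X22 False del: of_nat_add of_nat_mult)
      apply (rule wpt_step; simp add: pb kd nm19 X22 False del: of_nat_add of_nat_mult)
      apply (rule wpt_step; simp add: pb kd nm19 X22 False del: of_nat_add of_nat_mult)
      apply (rule wpt_step; simp add: pb kd nm19 X22 False del: of_nat_add of_nat_mult)
      apply (rule wpt_step; simp add: pb kd nm19 X22 False del: of_nat_add of_nat_mult)
      apply (rule wpt_step; simp add: pb kd nm19 X22 False del: of_nat_add of_nat_mult)
      apply (rule wpt_step; simp add: pb kd nm19 X22 False del: of_nat_add of_nat_mult)
      apply (rule wpt_step; simp add: pb kd nm19 X22 False del: of_nat_add of_nat_mult)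
      apply (rule wpt_call[OF loopC[rule_format, where idx=19 and r="n * m - 19" and n=n and m=m and X=X and H=H and F=F and k=k and A=A]])
      apply (use False XB X22 lay pb in \<open>auto simp: cregs_def H_def F_def\<close>)[10]
      subgoal for t mem'
        apply (simp only: cregs_def)
        apply (elim conjE)
        apply (rule wpt_step; simp)
        apply (rule wpt_step; simp)
        apply (rule wpt_done)
        apply (simp add: postH_def Let_def X_def[symmetric] H_def[symmetric] F_def[symmetric] lay cregs_def)
        apply (intro conjI)
        subgoal by (erule le_trans) simp
        apply (rule arrs_init[OF H_def F_def])
        using XB X22 by auto
      done
  qed
qed

lemma bound_arith:
  fixes n m k t1 t2 t3 t4 t5 :: nat
  assumes "1 \<le> n" "1 \<le> m" "1 \<le> k"
    "t1 \<le> 9" "t2 \<le> 38" "t3 \<le> 7 * (n * m) + 30" "t4 \<le> k * (m * (21 * n + 30) + 8) + 1" "t5 \<le> 18 * m + 20"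
  shows "t1 + (t2 + (t3 + (t4 + (t5 + 0)))) \<le> 200 * n * m * k"
proof -
  define N where "N = n * m * k"
  have e: "k * (m * (21 * n + 30) + 8) = 21 * N + 30 * (m * k) + 8 * k" unfolding N_def by (simp add: algebra_simps)
  have "1 * 1 \<le> n * m" using assms(1,2) by (intro mult_le_mono) auto
  then have nm: "1 \<le> n * m" by simp
  have a1: "n * m \<le> N" unfolding N_def using assms(3) by simp
  have a2: "m * k \<le> N" unfolding N_def using assms(1) by simp
  have a3: "k \<le> N" unfolding N_def using nm by simp
  have a4: "m \<le> N" using a2 assms(3) by (metis le_trans mult_le_mono2 mult.right_neutral)
  have a5: "1 \<le> N" using a3 assms(3) by simp
  have "200 * n * m * k = 200 * N" unfolding N_def by (simp add: algebra_simps)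
  then show ?thesis using assms(4-8) e a1 a2 a3 a4 a5 by linarith
qed

lemma main_wpt:
  assumes n1: "1 \<le> n" and k1: "1 \<le> k" and km: "k \<le> m"
  shows "wpt prog (0, init_mem n m A k) (\<lambda>t c. t \<le> 200 * n * m * k \<and> halted prog c \<and>
           provides_EJR n m A k (output_committee n m (snd c)))"
proof -
  have m1: "1 \<le> m" using k1 km by simp
  define X where "X = Xv n m k"
  define H where "H = X + n * m + 19"
  define F where "F = H + n"
  define Wm where "Wm = lev n m k A k {}"
  define Wf where "Wf = fillf k Wm m"
  have XB: "n * m + m + 186 \<le> X" using Xv_big[OF n1 m1 k1] unfolding X_def .
  have nm1: "1 \<le> n * m" using n1 m1 by (metis mult_le_mono nat_mult_1)
  have Wm_sub: "Wm \<subseteq> {..<m}" using lev_sub[of "{}" n m k A k] unfolding Wm_def by simp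
  have Wf_sub: "Wf \<subseteq> {..<m}" using fillf_sub[of Wm k m] Wm_sub unfolding Wf_def by blast
  have ejr: "provides_EJR n m A k Wf" using algW_EJR[OF n1 k1 km, of A] unfolding algW_def Wf_def Wm_def .
  have out: "output_committee n m mem = Wf" if "\<forall>j<m. mem (3 + n * m + j) = (if j \<in> Wf then 1 else 0)" for mem
    using that Wf_sub unfolding output_committee_def by (auto split: if_splits)
  show ?thesis
    apply (rule wpt_call[OF segA])
    apply (rule wpt_call[OF segB[OF n1 m1 k1]], assumption)
    apply (rule wpt_call[OF segC[OF n1 m1 k1]], assumption)
    subgoal for t1 mem1 t2 mem2 t3 mem3
      apply (simp only: postH_def Let_def X_def[symmetric] H_def[symmetric] F_def[symmetric])
      apply (elim conjE)
      apply (rule wpt_call[OF loopV[rule_format, where W="{}" and l=k and n=n and m=m and k=k and X=X and H=H and F=F and A=A]])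
      apply (simp_all only: empty_subsetI)[6]
      apply (simp only: postV_def Wm_def[symmetric])
      apply (elim conjE)
      apply (rule wpt_call[OF tail[where n=n and m=m and k=k and X=X and H=H and F=F and A=A and W=Wm]])
      apply assumption+
      using Wm_sub apply simp
      apply assumption
      using nm1 apply simp
      using XB apply simp
      apply (rule wpt_done)
      apply (simp only: Wf_def[symmetric])
      using ejr out bound_arith[OF n1 m1 k1] by (auto simp: halted_def)
    done
qed

theorem mainTheorem12:
  shows "\<exists>(P :: instr list) (c :: nat).
     \<forall>n m k (A :: nat \<Rightarrow> nat set).
       1 \<le> n \<longrightarrow> 1 \<le> k \<longrightarrow> k \<le> m \<longrightarrow> (\<forall>i<n. A i \<subseteq> {..<m}) \<longrightarrow>
       (\<exists>t. t \<le> c * n * m * k \<and>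
            halted P (run P t (0, init_mem n m A k)) \<and>
            provides_EJR n m A k (output_committee n m (snd (run P t (0, init_mem n m A k)))))"
  apply (rule exI[of _ prog], rule exI[of _ 200])
  apply (intro allI impI)
  subgoal for n m k A using main_wpt[of n k m A] unfolding wpt_def by blast
  done

end
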